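(* Let $G$ be a group and $N\trianglelefteq G$ a solvable normal subgroup of derived length $d$ and finite exponent. (i) If $\exp(N)$ is odd, then $\exp(N\otimes G)$ divides $(\exp(N))^d$; in particular $\exp(M(G,N))$ divides $(\exp(N))^d$. (ii) If $\exp(N)$ is even, then $\exp(N\otimes G)$ divides $2^d(\exp(N))^d$; in particular $\exp(M(G,N))$ divides $2^d(\exp(N))^d$.
   Context: Conventions: ${}^g h = ghg^{-1}$, $[g,h]=ghg^{-1}h^{-1}$. $N\otimes G$ is generated by symbols $x\otimes g$ ($x\in N$, $g\in G$) subject to $xx'\otimes g=({}^x x'\otimes {}^x g)(x\otimes g)$ and $x\otimes gg'=(x\otimes g)({}^g x\otimes {}^g g')$; $N\wedge G$ is its quotient by the subgroup generated by all $x\otimes x$, $x\in N$. The relative Schur multiplier $M(G,N)$ is the kernel of the homomorphism $N\wedge G\to G$, $x\wedge g\mapsto [x,g]$. *)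

theory Defs
  imports "HOL-Algebra.Algebra"
begin

text \<open>Exponent of a subset N of a group G (intended: a subgroup): the least positive n
  with x^n = 1 for all x in N, and 0 if no such n exists (infinite exponent).\<close>
definition subgroup_exponent :: "('a, 'b) monoid_scheme \<Rightarrow> 'a set \<Rightarrow> nat" where
  "subgroup_exponent G N =
     (if \<exists>n::nat>0. \<forall>x\<in>N. x [^]\<^bsub>G\<^esub> n = \<one>\<^bsub>G\<^esub>
      then (LEAST n::nat. n > 0 \<and> (\<forall>x\<in>N. x [^]\<^bsub>G\<^esub> n = \<one>\<^bsub>G\<^esub>))
      else 0)"

text \<open>Words in the free group on symbols (x, g): a letter (x, g, False) stands for
  the generator x \<otimes> g, a letter (x, g, True) for its inverse.\<close>
type_synonym 'a tword = "('a \<times> 'a \<times> bool) list"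

definition conjg :: "('a, 'b) monoid_scheme \<Rightarrow> 'a \<Rightarrow> 'a \<Rightarrow> 'a" where
  "conjg G g h = g \<otimes>\<^bsub>G\<^esub> h \<otimes>\<^bsub>G\<^esub> inv\<^bsub>G\<^esub> g"

definition comm :: "('a, 'b) monoid_scheme \<Rightarrow> 'a \<Rightarrow> 'a \<Rightarrow> 'a" where
  "comm G g h = g \<otimes>\<^bsub>G\<^esub> h \<otimes>\<^bsub>G\<^esub> inv\<^bsub>G\<^esub> g \<otimes>\<^bsub>G\<^esub> inv\<^bsub>G\<^esub> h"

fun flip_letter :: "'a \<times> 'a \<times> bool \<Rightarrow> 'a \<times> 'a \<times> bool" where
  "flip_letter (x, g, b) = (x, g, \<not> b)"

definition wpow :: "'a tword \<Rightarrow> nat \<Rightarrow> 'a tword" where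
  "wpow w n = concat (replicate n w)"

text \<open>The congruence on words defining N \<otimes> G (free group relations plus the two
  defining relations of the nonabelian tensor product).\<close>
inductive tensor_eq :: "('a, 'b) monoid_scheme \<Rightarrow> 'a set \<Rightarrow> 'a tword \<Rightarrow> 'a tword \<Rightarrow> bool"
  for G N where
  refl: "tensor_eq G N w w"
| sym: "tensor_eq G N u v \<Longrightarrow> tensor_eq G N v u"
| trans: "tensor_eq G N u v \<Longrightarrow> tensor_eq G N v w \<Longrightarrow> tensor_eq G N u w"
| cong: "tensor_eq G N u v \<Longrightarrow> tensor_eq G N (a @ u @ b) (a @ v @ b)"
| cancel: "tensor_eq G N [l, flip_letter l] []"
| rel1: "\<lbrakk>x \<in> N; x' \<in> N; g \<in> carrier G\<rbrakk> \<Longrightarrow>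
     tensor_eq G N [(x \<otimes>\<^bsub>G\<^esub> x', g, False)]
                   [(conjg G x x', conjg G x g, False), (x, g, False)]"
| rel2: "\<lbrakk>x \<in> N; g \<in> carrier G; g' \<in> carrier G\<rbrakk> \<Longrightarrow>
     tensor_eq G N [(x, g \<otimes>\<^bsub>G\<^esub> g', False)]
                   [(x, g, False), (conjg G g x, conjg G g g', False)]"

text \<open>The congruence defining N \<wedge> G: additionally x \<otimes> x = 1 for x in N.\<close>
inductive wedge_eq :: "('a, 'b) monoid_scheme \<Rightarrow> 'a set \<Rightarrow> 'a tword \<Rightarrow> 'a tword \<Rightarrow> bool"
  for G N where
  refl: "wedge_eq G N w w"
| sym: "wedge_eq G N u v \<Longrightarrow> wedge_eq G N v u"
| trans: "wedge_eq G N u v \<Longrightarrow> wedge_eq G N v w \<Longrightarrow> wedge_eq G N u w"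
| cong: "wedge_eq G N u v \<Longrightarrow> wedge_eq G N (a @ u @ b) (a @ v @ b)"
| cancel: "wedge_eq G N [l, flip_letter l] []"
| rel1: "\<lbrakk>x \<in> N; x' \<in> N; g \<in> carrier G\<rbrakk> \<Longrightarrow>
     wedge_eq G N [(x \<otimes>\<^bsub>G\<^esub> x', g, False)]
                  [(conjg G x x', conjg G x g, False), (x, g, False)]"
| rel2: "\<lbrakk>x \<in> N; g \<in> carrier G; g' \<in> carrier G\<rbrakk> \<Longrightarrow>
     wedge_eq G N [(x, g \<otimes>\<^bsub>G\<^esub> g', False)]
                  [(x, g, False), (conjg G g x, conjg G g g', False)]"
| diag: "x \<in> N \<Longrightarrow> wedge_eq G N [(x, x, False)] []"

definition twords :: "('a, 'b) monoid_scheme \<Rightarrow> 'a set \<Rightarrow> 'a tword set" where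
  "twords G N = {w. \<forall>(x, g, b) \<in> set w. x \<in> N \<and> g \<in> carrier G}"

text \<open>Image of a word under N \<wedge> G \<rightarrow> G, x \<wedge> g \<mapsto> [x,g].\<close>
definition comm_eval :: "('a, 'b) monoid_scheme \<Rightarrow> 'a tword \<Rightarrow> 'a" where
  "comm_eval G w = foldr (\<lambda>(x, g, b) acc.
      (if b then inv\<^bsub>G\<^esub> (comm G x g) else comm G x g) \<otimes>\<^bsub>G\<^esub> acc) w \<one>\<^bsub>G\<^esub>"

definition tensor_exponent :: "('a, 'b) monoid_scheme \<Rightarrow> 'a set \<Rightarrow> nat" where
  "tensor_exponent G N =
     (if \<exists>n>0. \<forall>w\<in>twords G N. tensor_eq G N (wpow w n) []
      then (LEAST n. n > 0 \<and> (\<forall>w\<in>twords G N. tensor_eq G N (wpow w n) []))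
      else 0)"

text \<open>Words representing elements of M(G,N) = ker(N \<wedge> G \<rightarrow> G).\<close>
definition mwords :: "('a, 'b) monoid_scheme \<Rightarrow> 'a set \<Rightarrow> 'a tword set" where
  "mwords G N = {w \<in> twords G N. comm_eval G w = \<one>\<^bsub>G\<^esub>}"

definition rel_multiplier_exponent :: "('a, 'b) monoid_scheme \<Rightarrow> 'a set \<Rightarrow> nat" where
  "rel_multiplier_exponent G N =
     (if \<exists>n>0. \<forall>w\<in>mwords G N. wedge_eq G N (wpow w n) []
      then (LEAST n. n > 0 \<and> (\<forall>w\<in>mwords G N. wedge_eq G N (wpow w n) []))
      else 0)"

end

theory Submission
  imports Defs
begin

context group begin

definition cm :: "'a \<Rightarrow> 'a \<Rightarrow> 'a" where
  "cm u v = u \<otimes> v \<otimes> inv u \<otimes> inv v"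

lemma cm_closed[simp]: "u \<in> carrier G \<Longrightarrow> v \<in> carrier G \<Longrightarrow> cm u v \<in> carrier G"
  by (simp add: cm_def)

lemma cm_eq: "u \<in> carrier G \<Longrightarrow> v \<in> carrier G \<Longrightarrow> u \<otimes> v = cm u v \<otimes> v \<otimes> u"
  by (simp add: cm_def m_assoc)

lemma comm_pow1:
  assumes x: "x \<in> carrier G" and y: "y \<in> carrier G" and xy: "x \<otimes> y = y \<otimes> x"
  shows "x [^] (k::nat) \<otimes> y = y \<otimes> x [^] k"
proof (induction k)
  case 0 then show ?case using y by simp
next
  case (Suc k)
  have "x [^] Suc k \<otimes> y = x [^] k \<otimes> (x \<otimes> y)" using x y by (simp add: m_assoc)
  also have "\<dots> = (x [^] k \<otimes> y) \<otimes> x" using x y xy by (simp add: m_assoc)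
  also have "\<dots> = y \<otimes> x [^] Suc k" using Suc x y by (simp add: m_assoc)
  finally show ?case .
qed

lemma comm_pows:
  assumes x: "x \<in> carrier G" and y: "y \<in> carrier G" and xy: "x \<otimes> y = y \<otimes> x"
  shows "x [^] (k::nat) \<otimes> y [^] (n::nat) = y [^] n \<otimes> x [^] k"
proof -
  have "x [^] k \<otimes> y [^] n = y [^] n \<otimes> x [^] k"
    by (rule comm_pow1[symmetric]) (use x y comm_pow1[OF x y xy] in \<open>auto intro: comm_pow1[symmetric]\<close>)
  then show ?thesis .
qed

lemma pow_comm_left:
  assumes u: "u \<in> carrier G" and v: "v \<in> carrier G"
    and cu: "cm v u \<otimes> u = u \<otimes> cm v u" and cv: "cm v u \<otimes> v = v \<otimes> cm v u"
  shows "v [^] (n::nat) \<otimes> u = cm v u [^] n \<otimes> u \<otimes> v [^] n"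
proof (induction n)
  case 0 then show ?case using u by simp
next
  case (Suc n)
  let ?c = "cm v u"
  have c: "?c \<in> carrier G" using u v by simp
  have cvn: "?c \<otimes> v [^] n = v [^] n \<otimes> ?c"
  proof (induction n)
    case 0 then show ?case using c by simp
  next
    case (Suc n)
    have "?c \<otimes> v [^] Suc n = (?c \<otimes> v [^] n) \<otimes> v" using c v by (simp add: m_assoc)
    also have "\<dots> = v [^] n \<otimes> (?c \<otimes> v)" using Suc c v by (simp add: m_assoc)
    also have "\<dots> = v [^] Suc n \<otimes> ?c" using cv c v by (simp add: m_assoc)
    finally show ?case .
  qed
  have "v [^] Suc n \<otimes> u = v [^] n \<otimes> (v \<otimes> u)" using u v by (simp add: m_assoc)
  also have "\<dots> = v [^] n \<otimes> (?c \<otimes> u \<otimes> v)" using cm_eq[OF v u] by simp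
  also have "\<dots> = (v [^] n \<otimes> ?c) \<otimes> u \<otimes> v" using c u v by (simp add: m_assoc)
  also have "\<dots> = ?c \<otimes> (v [^] n \<otimes> u) \<otimes> v" using cvn c u v by (simp add: m_assoc[symmetric])
  also have "\<dots> = ?c \<otimes> (?c [^] n \<otimes> u \<otimes> v [^] n) \<otimes> v" using Suc by simp
  also have "\<dots> = (?c \<otimes> ?c [^] n) \<otimes> u \<otimes> (v [^] n \<otimes> v)" using c u v by (simp add: m_assoc)
  also have "\<dots> = ?c [^] Suc n \<otimes> u \<otimes> v [^] Suc n"
  proof -
    have "?c \<otimes> ?c [^] n = ?c [^] Suc n" by (rule nat_pow_Suc2[OF c, symmetric])
    then show ?thesis by simp
  qed
  finally show ?case .
qed

lemma pow_prod_class2: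
  assumes u: "u \<in> carrier G" and v: "v \<in> carrier G"
    and cu: "cm v u \<otimes> u = u \<otimes> cm v u" and cv: "cm v u \<otimes> v = v \<otimes> cm v u"
  shows "(u \<otimes> v) [^] (n::nat) = u [^] n \<otimes> v [^] n \<otimes> cm v u [^] (n * (n - 1) div 2)"
proof (induction n)
  case 0 then show ?case by simp
next
  case (Suc n)
  let ?c = "cm v u"
  have c: "?c \<in> carrier G" using u v by simp
  have cvn: "?c [^] k \<otimes> v [^] n = v [^] n \<otimes> ?c [^] k" for k :: nat
    using comm_pows[OF c v cv] by simp
  have cun: "?c [^] k \<otimes> u = u \<otimes> ?c [^] k" for k :: nat
    using comm_pows[OF c u cu, of k 1] c u by simp
  have e: "Suc n * (Suc n - 1) div 2 = n * (n - 1) div 2 + n"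
    by (induction n) auto
  have "(u \<otimes> v) [^] Suc n = u [^] n \<otimes> v [^] n \<otimes> ?c [^] (n * (n - 1) div 2) \<otimes> (u \<otimes> v)"
    using Suc by simp
  also have "\<dots> = u [^] n \<otimes> (v [^] n \<otimes> u) \<otimes> ?c [^] (n * (n - 1) div 2) \<otimes> v"
  proof -
    have h: "?c [^] (n * (n - 1) div 2) \<otimes> (u \<otimes> v) = u \<otimes> (?c [^] (n * (n - 1) div 2) \<otimes> v)"
      using c u v cun by (simp add: m_assoc[symmetric])
    show ?thesis using c u v h by (simp add: m_assoc)
  qed
  also have "\<dots> = u [^] n \<otimes> (?c [^] n \<otimes> u \<otimes> v [^] n) \<otimes> ?c [^] (n * (n - 1) div 2) \<otimes> v"
    using pow_comm_left[OF u v cu cv] by simp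
  also have "\<dots> = u [^] n \<otimes> u \<otimes> ?c [^] n \<otimes> (v [^] n \<otimes> ?c [^] (n * (n - 1) div 2)) \<otimes> v"
    using c u v cun by (simp add: m_assoc)
  also have "\<dots> = u [^] n \<otimes> u \<otimes> ?c [^] n \<otimes> (?c [^] (n * (n - 1) div 2) \<otimes> v [^] n) \<otimes> v"
    using cvn by simp
  also have "\<dots> = (u [^] n \<otimes> u) \<otimes> (v [^] n \<otimes> v) \<otimes> (?c [^] (n * (n - 1) div 2) \<otimes> ?c [^] n)"
  proof -
    have gen: "u [^] n \<otimes> u \<otimes> ?c [^] n \<otimes> (?c [^] K \<otimes> v [^] n) \<otimes> v
        = (u [^] n \<otimes> u) \<otimes> (v [^] n \<otimes> v) \<otimes> (?c [^] K \<otimes> ?c [^] n)" for K :: nat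
    proof -
      have A: "?c [^] n \<otimes> ?c [^] K = ?c [^] (n + K)" using c by (simp add: nat_pow_mult)
      have B: "?c [^] (n + K) \<otimes> v [^] n = v [^] n \<otimes> ?c [^] (n + K)" by (rule cvn)
      have C: "?c [^] (n + K) \<otimes> v = v \<otimes> ?c [^] (n + K)" by (rule comm_pow1[OF c v cv])
      have "u [^] n \<otimes> u \<otimes> ?c [^] n \<otimes> (?c [^] K \<otimes> v [^] n) \<otimes> v
          = (u [^] n \<otimes> u) \<otimes> ((?c [^] n \<otimes> ?c [^] K) \<otimes> v [^] n) \<otimes> v"
        using c u v by (simp add: m_assoc)
      also have "\<dots> = (u [^] n \<otimes> u) \<otimes> (v [^] n \<otimes> (?c [^] (n + K) \<otimes> v))"
        using c u v by (simp add: A B m_assoc)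
      also have "\<dots> = (u [^] n \<otimes> u) \<otimes> (v [^] n \<otimes> v) \<otimes> ?c [^] (n + K)"
        using c u v by (simp add: C m_assoc)
      also have "\<dots> = (u [^] n \<otimes> u) \<otimes> (v [^] n \<otimes> v) \<otimes> (?c [^] K \<otimes> ?c [^] n)"
        using c by (simp add: nat_pow_mult add.commute)
      finally show ?thesis .
    qed
    show ?thesis by (rule gen)
  qed
  also have "\<dots> = u [^] Suc n \<otimes> v [^] Suc n \<otimes> ?c [^] (Suc n * (Suc n - 1) div 2)"
    by (subst e) (simp add: nat_pow_mult c)
  finally show ?case .
qed

lemma inv_l_cancel_assoc: "x \<in> carrier G \<Longrightarrow> y \<in> carrier G \<Longrightarrow> inv x \<otimes> (x \<otimes> y) = y"
  by (simp add: m_assoc[symmetric])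
lemma inv_r_cancel_assoc: "x \<in> carrier G \<Longrightarrow> y \<in> carrier G \<Longrightarrow> x \<otimes> (inv x \<otimes> y) = y"
  by (simp add: m_assoc[symmetric])

lemma cm_inv_right: "a \<in> carrier G \<Longrightarrow> b \<in> carrier G \<Longrightarrow> cm a (inv b) = inv b \<otimes> inv (cm a b) \<otimes> b"
  by (simp add: cm_def m_assoc inv_mult_group inv_l_cancel_assoc inv_r_cancel_assoc)
lemma cm_inv_left: "a \<in> carrier G \<Longrightarrow> b \<in> carrier G \<Longrightarrow> cm (inv a) b = inv a \<otimes> inv (cm a b) \<otimes> a"
  by (simp add: cm_def m_assoc inv_mult_group inv_l_cancel_assoc inv_r_cancel_assoc)
lemma cm_mult_right: "a \<in> carrier G \<Longrightarrow> b \<in> carrier G \<Longrightarrow> c \<in> carrier G \<Longrightarrow>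
    cm a (b \<otimes> c) = cm a b \<otimes> (b \<otimes> cm a c \<otimes> inv b)"
  by (simp add: cm_def m_assoc inv_mult_group inv_l_cancel_assoc inv_r_cancel_assoc)
lemma cm_mult_left: "a \<in> carrier G \<Longrightarrow> b \<in> carrier G \<Longrightarrow> c \<in> carrier G \<Longrightarrow>
    cm (a \<otimes> b) c = a \<otimes> cm b c \<otimes> inv a \<otimes> cm a c"
  by (simp add: cm_def m_assoc inv_mult_group inv_l_cancel_assoc inv_r_cancel_assoc)

lemma comm_inv:
  assumes z: "z \<in> carrier G" and h: "h \<in> carrier G" and e: "z \<otimes> h = h \<otimes> z"
  shows "z \<otimes> inv h = inv h \<otimes> z"
proof -
  have "inv h \<otimes> (z \<otimes> h) \<otimes> inv h = inv h \<otimes> (h \<otimes> z) \<otimes> inv h" using e by simp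
  then show ?thesis using z h by (simp add: m_assoc inv_l_cancel_assoc)
qed

lemma conj_triv: "a \<in> carrier G \<Longrightarrow> w \<in> carrier G \<Longrightarrow> w \<otimes> a = a \<otimes> w \<Longrightarrow> a \<otimes> w \<otimes> inv a = w"
proof -
  assume c: "a \<in> carrier G" "w \<in> carrier G" and e: "w \<otimes> a = a \<otimes> w"
  have "a \<otimes> w \<otimes> inv a = w \<otimes> a \<otimes> inv a" using e by simp
  then show ?thesis using c by (simp add: m_assoc)
qed
lemma conj_triv': "a \<in> carrier G \<Longrightarrow> w \<in> carrier G \<Longrightarrow> w \<otimes> a = a \<otimes> w \<Longrightarrow> inv a \<otimes> w \<otimes> a = w"
proof -
  assume c: "a \<in> carrier G" "w \<in> carrier G" and e: "w \<otimes> a = a \<otimes> w"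
  have "inv a \<otimes> w \<otimes> a = inv a \<otimes> (a \<otimes> w)" using e c by (simp add: m_assoc)
  then show ?thesis using c by (simp add: inv_l_cancel_assoc)
qed

lemma class2:
  assumes S: "S \<subseteq> carrier G" and ZS: "Zs \<subseteq> S"
    and cms: "\<And>s s'. s \<in> S \<Longrightarrow> s' \<in> S \<Longrightarrow> cm s s' \<in> Zs"
    and cent: "\<And>z s. z \<in> Zs \<Longrightarrow> s \<in> S \<Longrightarrow> z \<otimes> s = s \<otimes> z"
    and zexp: "\<And>z. z \<in> Zs \<Longrightarrow> z [^] (e::nat) = \<one>"
    and sm: "\<And>s. s \<in> S \<Longrightarrow> s [^] (m::nat) = \<one>"
    and dv: "e dvd m * (m - 1) div 2"
    and u: "u \<in> generate G S"
  shows "u [^] m = \<one>"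
proof -
  have Zc: "Zs \<subseteq> carrier G" using S ZS by auto
  have gS: "generate G S \<subseteq> carrier G" using generate_incl[OF S] .
  have gZ: "generate G Zs \<subseteq> carrier G" using generate_incl[OF Zc] .
  have L1: "z \<otimes> u = u \<otimes> z" if z: "z \<in> Zs" and u: "u \<in> generate G S" for z u
    using u
  proof (induction rule: generate.induct)
    case one then show ?case using z Zc by auto
  next
    case (incl h) then show ?case using cent z by auto
  next
    case (inv h)
    have zc: "z \<in> carrier G" and hc: "h \<in> carrier G" using z Zc inv S by auto
    have "z \<otimes> h = h \<otimes> z" using cent z inv by auto
    then show ?case using zc hc comm_inv by simp
  next
    case (eng h1 h2)
    have zc: "z \<in> carrier G" using z Zc by auto
    have c: "h1 \<in> carrier G" "h2 \<in> carrier G" using eng gS by auto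
    have "z \<otimes> (h1 \<otimes> h2) = (z \<otimes> h1) \<otimes> h2" using zc c by (simp add: m_assoc)
    also have "\<dots> = h1 \<otimes> (z \<otimes> h2)" using eng zc c by (simp add: m_assoc)
    also have "\<dots> = (h1 \<otimes> h2) \<otimes> z" using eng zc c by (simp add: m_assoc)
    finally show ?case .
  qed
  have L2: "z \<otimes> u = u \<otimes> z" if z: "z \<in> generate G Zs" and u: "u \<in> generate G S" for z u
    using z
  proof (induction rule: generate.induct)
    case one then show ?case using u gS by auto
  next
    case (incl h) then show ?case using L1 u by auto
  next
    case (inv h)
    have zc: "u \<in> carrier G" and hc: "h \<in> carrier G" using u gS inv Zc by auto
    have "h \<otimes> u = u \<otimes> h" using L1 u inv by auto
    then show ?case using zc hc comm_inv by simp
  next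
    case (eng h1 h2)
    have zc: "u \<in> carrier G" using u gS by auto
    have c: "h1 \<in> carrier G" "h2 \<in> carrier G" using eng gZ by auto
    have "(h1 \<otimes> h2) \<otimes> u = h1 \<otimes> (h2 \<otimes> u)" using zc c by (simp add: m_assoc)
    also have "\<dots> = h1 \<otimes> (u \<otimes> h2)" using eng by simp
    also have "\<dots> = (h1 \<otimes> u) \<otimes> h2" using zc c by (simp add: m_assoc)
    also have "\<dots> = (u \<otimes> h1) \<otimes> h2" using eng by simp
    also have "\<dots> = u \<otimes> (h1 \<otimes> h2)" using zc c by (simp add: m_assoc)
    finally show ?case .
  qed
  have gZS: "generate G Zs \<subseteq> generate G S" using mono_generate[OF ZS] .
  have L3: "z [^] e = \<one>" if z: "z \<in> generate G Zs" for z
    using z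
  proof (induction rule: generate.induct)
    case one then show ?case by simp
  next
    case (incl h) then show ?case using zexp by auto
  next
    case (inv h) then show ?case using zexp Zc by (auto simp: nat_pow_inv)
  next
    case (eng h1 h2)
    have c: "h1 \<in> carrier G" "h2 \<in> carrier G" using eng gZ by auto
    have "h1 \<otimes> h2 = h2 \<otimes> h1" using L2 eng gZS by auto
    then show ?case using pow_mult_distrib[of h1 h2 e] c eng by simp
  qed
  have L4a: "cm s v \<in> generate G Zs" if s: "s \<in> S" and v: "v \<in> generate G S" for s v
    using v
  proof (induction rule: generate.induct)
    case one
    have "s \<in> carrier G" using s S by auto
    then show ?case by (simp add: cm_def generate.one)
  next
    case (incl h) then show ?case using cms s by (auto intro: generate.incl)
  next
    case (inv h)
    have c: "s \<in> carrier G" "h \<in> carrier G" using s inv S by auto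
    have w: "inv (cm s h) \<in> generate G Zs" using cms[OF s inv] by (rule generate.inv)
    have "inv (cm s h) \<otimes> h = h \<otimes> inv (cm s h)" using L2[OF w] inv by (auto intro: generate.incl)
    then have "cm s (inv h) = inv (cm s h)" using c cm_inv_right conj_triv' by simp
    then show ?case using w by simp
  next
    case (eng h1 h2)
    have c: "s \<in> carrier G" "h1 \<in> carrier G" "h2 \<in> carrier G" using s eng gS S by auto
    have "cm s h2 \<otimes> h1 = h1 \<otimes> cm s h2" using L2 eng by auto
    then have "cm s (h1 \<otimes> h2) = cm s h1 \<otimes> cm s h2"
      using c cm_mult_right conj_triv by simp
    then show ?case using eng by (auto intro: generate.eng)
  qed
  have L4: "cm u v \<in> generate G Zs" if u: "u \<in> generate G S" and v: "v \<in> generate G S" for u v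
    using u
  proof (induction rule: generate.induct)
    case one
    have "v \<in> carrier G" using v gS by auto
    then show ?case by (simp add: cm_def generate.one)
  next
    case (incl h) then show ?case using L4a v by auto
  next
    case (inv h)
    have c: "v \<in> carrier G" "h \<in> carrier G" using v gS inv S by auto
    have w: "inv (cm h v) \<in> generate G Zs"
      using L4a[OF inv v] generate_m_inv_closed[OF Zc] by auto
    have "inv (cm h v) \<otimes> h = h \<otimes> inv (cm h v)" using L2[OF w] inv by (auto intro: generate.incl)
    then have "cm (inv h) v = inv (cm h v)" using c cm_inv_left conj_triv' by simp
    then show ?case using w by simp
  next
    case (eng h1 h2)
    have c: "v \<in> carrier G" "h1 \<in> carrier G" "h2 \<in> carrier G" using v eng gS by auto
    have "cm h2 v \<otimes> h1 = h1 \<otimes> cm h2 v" using L2 eng by auto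
    then have "cm (h1 \<otimes> h2) v = cm h2 v \<otimes> cm h1 v"
      using c cm_mult_left conj_triv by simp
    then show ?case using eng by (auto intro: generate.eng)
  qed
  show ?thesis
    using u
  proof (induction rule: generate.induct)
    case one then show ?case by simp
  next
    case (incl h) then show ?case using sm by auto
  next
    case (inv h) then show ?case using sm S by (auto simp: nat_pow_inv)
  next
    case (eng h1 h2)
    have c: "h1 \<in> carrier G" "h2 \<in> carrier G" using eng gS by auto
    have w: "cm h2 h1 \<in> generate G Zs" using L4 eng by auto
    have cu: "cm h2 h1 \<otimes> h1 = h1 \<otimes> cm h2 h1" and cv: "cm h2 h1 \<otimes> h2 = h2 \<otimes> cm h2 h1"
      using L2[OF w] eng by auto
    obtain q where q: "m * (m - 1) div 2 = e * q" using dv by auto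
    have wc: "cm h2 h1 \<in> carrier G" using w gZ by auto
    have "cm h2 h1 [^] (m * (m - 1) div 2) = \<one>"
      using q L3[OF w] wc by (simp add: nat_pow_pow[symmetric])
    then show ?case using pow_prod_class2[OF c cu cv, of m] eng by simp
  qed
qed

end

context group begin

lemma conj_closure:
  assumes S0: "S0 \<subseteq> carrier G" and S1: "S1 \<subseteq> carrier G"
    and c1: "\<And>s t. s \<in> S0 \<Longrightarrow> t \<in> S1 \<Longrightarrow> s \<otimes> t \<otimes> inv s \<in> S1"
    and c2: "\<And>s t. s \<in> S0 \<Longrightarrow> t \<in> S1 \<Longrightarrow> inv s \<otimes> t \<otimes> s \<in> S1"
    and x: "x \<in> generate G S0" and h: "h \<in> generate G S1"
  shows "x \<otimes> h \<otimes> inv x \<in> generate G S1"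
proof -
  have g0: "generate G S0 \<subseteq> carrier G" using generate_incl[OF S0] .
  have g1: "generate G S1 \<subseteq> carrier G" using generate_incl[OF S1] .
  have hom: "a \<otimes> (h1 \<otimes> h2) \<otimes> inv a = (a \<otimes> h1 \<otimes> inv a) \<otimes> (a \<otimes> h2 \<otimes> inv a)"
    if "a \<in> carrier G" "h1 \<in> carrier G" "h2 \<in> carrier G" for a h1 h2
    using that by (simp add: m_assoc inv_l_cancel_assoc)
  have invc: "a \<otimes> inv t \<otimes> inv a = inv (a \<otimes> t \<otimes> inv a)"
    if "a \<in> carrier G" "t \<in> carrier G" for a t
    using that by (simp add: m_assoc inv_mult_group)
  have single: "a \<otimes> h \<otimes> inv a \<in> generate G S1"
    if a: "a \<in> carrier G" and ca: "\<And>t. t \<in> S1 \<Longrightarrow> a \<otimes> t \<otimes> inv a \<in> S1" and h: "h \<in> generate G S1" for a h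
    using h
  proof (induction rule: generate.induct)
    case one then show ?case using a by (simp add: generate.one)
  next
    case (incl t) then show ?case using ca by (auto intro: generate.incl)
  next
    case (inv t)
    have "a \<otimes> inv t \<otimes> inv a = inv (a \<otimes> t \<otimes> inv a)" using invc a inv S1 by auto
    then show ?case using ca[OF inv] by (simp add: generate.inv)
  next
    case (eng h1 h2)
    have "a \<otimes> (h1 \<otimes> h2) \<otimes> inv a = (a \<otimes> h1 \<otimes> inv a) \<otimes> (a \<otimes> h2 \<otimes> inv a)"
      using hom a eng g1 by auto
    then show ?case using eng by (simp add: generate.eng)
  qed
  show ?thesis
    using x h
  proof (induction arbitrary: h rule: generate.induct)
    case one
    have "h \<in> carrier G" using one g1 by auto
    then show ?case using one by simp
  next
    case (incl s) then show ?case using single[of s h] c1 S0 by auto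
  next
    case (inv s)
    have "inv s \<otimes> t \<otimes> inv (inv s) \<in> S1" if "t \<in> S1" for t
      using c2[OF inv.hyps that] inv.hyps S0 by auto
    then show ?case using single[of "inv s" h] inv.hyps inv.prems S0 by auto
  next
    case (eng x1 x2)
    have c: "x1 \<in> carrier G" "x2 \<in> carrier G" "h \<in> carrier G" using eng g0 g1 by auto
    have "x1 \<otimes> x2 \<otimes> h \<otimes> inv (x1 \<otimes> x2) = x1 \<otimes> (x2 \<otimes> h \<otimes> inv x2) \<otimes> inv x1"
      using c by (simp add: m_assoc inv_mult_group)
    then show ?case using eng by simp
  qed
qed

lemma seqB:
  assumes S: "S \<in> carrier G" and Z: "Z \<in> carrier G" and zs: "Z \<otimes> S = S \<otimes> Z"
    and A0: "A 0 = \<one>"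
    and AS: "\<And>n. A (Suc n) = A n \<otimes> Z [^] n \<otimes> S"
  shows "A n = S [^] n \<otimes> Z [^] (n * (n - 1) div 2)"
proof (induction n)
  case 0 then show ?case using A0 by simp
next
  case (Suc n)
  define K where "K = n * (n - 1) div 2"
  have e: "Suc n * (Suc n - 1) div 2 = K + n" unfolding K_def by (induction n) auto
  have zk: "Z [^] k \<otimes> S = S \<otimes> Z [^] k" for k :: nat by (rule comm_pow1[OF Z S zs])
  have "A (Suc n) = (S [^] n \<otimes> Z [^] K) \<otimes> Z [^] n \<otimes> S" using AS Suc by (simp add: K_def)
  also have "\<dots> = S [^] n \<otimes> (Z [^] (K + n) \<otimes> S)" using S Z by (simp add: m_assoc nat_pow_mult)
  also have "\<dots> = S [^] n \<otimes> (S \<otimes> Z [^] (K + n))" by (simp only: zk)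
  also have "\<dots> = S [^] Suc n \<otimes> Z [^] (K + n)" using S Z by (simp add: m_assoc[symmetric])
  finally show ?case by (simp only: e)
qed

lemma seqA:
  assumes S: "S \<in> carrier G" and Z: "Z \<in> carrier G" and zs: "Z \<otimes> S = S \<otimes> Z"
    and A0: "A 0 = \<one>"
    and AS: "\<And>n. A (Suc n) = Z [^] n \<otimes> S \<otimes> A n"
  shows "A n = S [^] n \<otimes> Z [^] (n * (n - 1) div 2)"
proof (induction n)
  case 0 then show ?case using A0 by simp
next
  case (Suc n)
  define K where "K = n * (n - 1) div 2"
  have e: "Suc n * (Suc n - 1) div 2 = K + n" unfolding K_def by (induction n) auto
  have zk: "Z [^] k \<otimes> S [^] j = S [^] j \<otimes> Z [^] k" for k j :: nat by (rule comm_pows[OF Z S zs])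
  have zk1: "Z [^] k \<otimes> S = S \<otimes> Z [^] k" for k :: nat by (rule comm_pow1[OF Z S zs])
  have "A (Suc n) = Z [^] n \<otimes> S \<otimes> (S [^] n \<otimes> Z [^] K)" using AS Suc by (simp add: K_def)
  also have "\<dots> = (Z [^] n \<otimes> S \<otimes> S [^] n) \<otimes> Z [^] K" using S Z by (simp add: m_assoc)
  also have "Z [^] n \<otimes> S \<otimes> S [^] n = S \<otimes> (Z [^] n \<otimes> S [^] n)" using S Z by (simp add: zk1 m_assoc)
  also have "\<dots> = S \<otimes> (S [^] n \<otimes> Z [^] n)" by (simp only: zk)
  also have "S \<otimes> (S [^] n \<otimes> Z [^] n) \<otimes> Z [^] K = S [^] Suc n \<otimes> Z [^] (K + n)"
  proof -
    have a1: "S \<otimes> S [^] n = S [^] Suc n" by (rule nat_pow_Suc2[OF S, symmetric])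
    have a2: "Z [^] n \<otimes> Z [^] K = Z [^] (K + n)" using nat_pow_mult[OF Z, of n K] by (simp add: add.commute)
    have "S \<otimes> (S [^] n \<otimes> Z [^] n) \<otimes> Z [^] K = (S \<otimes> S [^] n) \<otimes> (Z [^] n \<otimes> Z [^] K)"
      using S Z by (simp add: m_assoc)
    then show ?thesis by (simp only: a1 a2)
  qed
  finally show ?case by (simp only: e)
qed

lemma half_twice: "even (x::nat) \<Longrightarrow> x div 2 + x div 2 = x" by presburger

lemma gen_order:
  fixes e m :: nat
  assumes S: "S \<in> carrier G" and Z: "Z \<in> carrier G"
    and ze: "Z [^] e = \<one>" and se: "S [^] e \<otimes> Z [^] (e * (e - 1) div 2) = \<one>"
    and m: "m = (if odd e then e else 2 * e)"
  shows "S [^] (m::nat) = \<one>"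
proof (cases "odd e")
  case True
  have "even (e - 1)" using True by simp
  then obtain q where q: "e - 1 = 2 * q" by (rule evenE)
  have "e * (e - 1) div 2 = e * q" using q by simp
  then have "Z [^] (e * (e - 1) div 2) = \<one>" using Z ze by (simp add: nat_pow_pow[symmetric])
  then show ?thesis using True m se S by simp
next
  case False
  have "inv (Z [^] (e * (e - 1) div 2)) = S [^] e"
    by (rule inv_equality[OF se]) (use S Z in simp_all)
  then have "S [^] e = inv (Z [^] (e * (e - 1) div 2))" by (rule HOL.sym)
  then have "S [^] (2 * e) = inv (Z [^] (e * (e - 1) div 2)) \<otimes> inv (Z [^] (e * (e - 1) div 2))"
    using S by (simp add: nat_pow_mult[symmetric] mult_2)
  also have "\<dots> = inv (Z [^] (e * (e - 1) div 2 + e * (e - 1) div 2))"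
  proof -
    define K where "K = e * (e - 1) div 2"
    have "Z [^] K \<otimes> Z [^] K = Z [^] (K + K)" by (rule nat_pow_mult[OF Z])
    then have "inv (Z [^] K) \<otimes> inv (Z [^] K) = inv (Z [^] (K + K))" using Z by (simp add: inv_mult_group[symmetric])
    then show ?thesis by (simp only: K_def)
  qed
  also have "e * (e - 1) div 2 + e * (e - 1) div 2 = e * (e - 1)"
    using False half_twice[of "e * (e - 1)"] by simp
  also have "Z [^] (e * (e - 1)) = \<one>" using Z ze by (simp add: nat_pow_pow[symmetric])
  finally show ?thesis using False m by simp
qed

lemma dvd_m:
  fixes e m :: nat
  assumes m: "m = (if odd e then e else 2 * e)"
  shows "e dvd m * (m - 1) div 2"
proof (cases "odd e")
  case True
  have "even (e - 1)" using True by simp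
  then obtain q where q: "e - 1 = 2 * q" by (rule evenE)
  have "m * (m - 1) div 2 = e * q" using q True m by simp
  then show ?thesis by simp
next
  case False
  have "m * (m - 1) div 2 = e * (2 * e - 1)" using False m by simp
  then show ?thesis by simp
qed

end

definition tcls :: "('a, 'b) monoid_scheme \<Rightarrow> 'a set \<Rightarrow> 'a tword \<Rightarrow> 'a tword set" where
  "tcls G N w = {v. tensor_eq G N w v}"

definition TT :: "('a, 'b) monoid_scheme \<Rightarrow> 'a set \<Rightarrow> 'a tword set monoid" where
  "TT G N = \<lparr>carrier = tcls G N ` twords G N,
             monoid.mult = (\<lambda>A B. {v. \<exists>a\<in>A. \<exists>b\<in>B. tensor_eq G N (a @ b) v}),
             one = tcls G N []\<rparr>"

definition winv :: "'a tword \<Rightarrow> 'a tword" where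
  "winv w = rev (map flip_letter w)"

definition gen :: "('a, 'b) monoid_scheme \<Rightarrow> 'a set \<Rightarrow> 'a \<Rightarrow> 'a \<Rightarrow> 'a tword set" where
  "gen G N x g = tcls G N [(x, g, False)]"

lemma flip_flip[simp]: "flip_letter (flip_letter l) = l"
  by (cases l) auto

lemma teq_app_right: "tensor_eq G N u v \<Longrightarrow> tensor_eq G N (u @ b) (v @ b)"
  using tensor_eq.cong[of G N u v "[]" b] by simp

lemma teq_app_left: "tensor_eq G N u v \<Longrightarrow> tensor_eq G N (a @ u) (a @ v)"
  using tensor_eq.cong[of G N u v a "[]"] by simp

lemma teq_app: "tensor_eq G N u u' \<Longrightarrow> tensor_eq G N v v' \<Longrightarrow> tensor_eq G N (u @ v) (u' @ v')"
  by (meson teq_app_left teq_app_right tensor_eq.trans)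

lemma tcls_eq_iff: "tcls G N u = tcls G N v \<longleftrightarrow> tensor_eq G N u v"
proof
  assume "tcls G N u = tcls G N v"
  then have "v \<in> tcls G N u" by (simp add: tcls_def tensor_eq.refl)
  then show "tensor_eq G N u v" by (simp add: tcls_def)
next
  assume e: "tensor_eq G N u v"
  show "tcls G N u = tcls G N v"
    unfolding tcls_def using e by (auto intro: tensor_eq.trans tensor_eq.sym)
qed

lemma TT_mult_cls: "tcls G N a \<otimes>\<^bsub>TT G N\<^esub> tcls G N b = tcls G N (a @ b)"
proof -
  have "{v. \<exists>a'\<in>tcls G N a. \<exists>b'\<in>tcls G N b. tensor_eq G N (a' @ b') v} = tcls G N (a @ b)"
  proof
    show "{v. \<exists>a'\<in>tcls G N a. \<exists>b'\<in>tcls G N b. tensor_eq G N (a' @ b') v} \<subseteq> tcls G N (a @ b)"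
      unfolding tcls_def by (auto intro: tensor_eq.trans teq_app)
    show "tcls G N (a @ b) \<subseteq> {v. \<exists>a'\<in>tcls G N a. \<exists>b'\<in>tcls G N b. tensor_eq G N (a' @ b') v}"
      unfolding tcls_def by (auto intro: tensor_eq.refl)
  qed
  then show ?thesis by (simp add: TT_def)
qed

lemma TT_one: "\<one>\<^bsub>TT G N\<^esub> = tcls G N []"
  by (simp add: TT_def)

lemma TT_carrier: "carrier (TT G N) = tcls G N ` twords G N"
  by (simp add: TT_def)

lemma winv_cancel: "tensor_eq G N (winv w @ w) []"
proof (induction w)
  case Nil then show ?case by (simp add: winv_def tensor_eq.refl)
next
  case (Cons l w)
  have c: "tensor_eq G N [flip_letter l, l] []"
    using tensor_eq.cancel[of G N "flip_letter l"] by simp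
  have "winv (l # w) @ l # w = winv w @ [flip_letter l, l] @ w" by (simp add: winv_def)
  moreover have "tensor_eq G N (winv w @ [flip_letter l, l] @ w) (winv w @ [] @ w)"
    using tensor_eq.cong[OF c] by blast
  ultimately show ?case using Cons by (auto intro: tensor_eq.trans)
qed

lemma twords_iff: "w \<in> twords G N \<longleftrightarrow> (\<forall>x g b. (x, g, b) \<in> set w \<longrightarrow> x \<in> N \<and> g \<in> carrier G)"
  unfolding twords_def by fastforce

lemma twords_append[simp]: "u @ v \<in> twords G N \<longleftrightarrow> u \<in> twords G N \<and> v \<in> twords G N"
  unfolding twords_iff by (auto; blast)

lemma twords_Cons[simp]: "(x, g, b) # v \<in> twords G N \<longleftrightarrow> x \<in> N \<and> g \<in> carrier G \<and> v \<in> twords G N"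
  unfolding twords_iff by auto

lemma twords_winv: "w \<in> twords G N \<Longrightarrow> winv w \<in> twords G N"
proof -
  assume w: "w \<in> twords G N"
  have "x \<in> N \<and> g \<in> carrier G" if "(x, g, b) \<in> set (winv w)" for x g b
  proof -
    from that have "(x, g, b) \<in> flip_letter ` set w" by (simp add: winv_def)
    then obtain l where l: "l \<in> set w" "(x, g, b) = flip_letter l" by blast
    obtain x' g' b' where "l = (x', g', b')" by (cases l) auto
    then show ?thesis using l w unfolding twords_iff by auto
  qed
  then show ?thesis unfolding twords_iff by blast
qed

lemma twords_Nil[simp]: "[] \<in> twords G N"
  by (simp add: twords_def)

lemma group_TT: "group (TT G N)"
proof (rule groupI)
  fix x y assume "x \<in> carrier (TT G N)" "y \<in> carrier (TT G N)"
  then obtain a b where "a \<in> twords G N" "b \<in> twords G N" "x = tcls G N a" "y = tcls G N b"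
    by (auto simp: TT_carrier)
  then show "x \<otimes>\<^bsub>TT G N\<^esub> y \<in> carrier (TT G N)"
    by (auto simp: TT_mult_cls TT_carrier)
next
  show "\<one>\<^bsub>TT G N\<^esub> \<in> carrier (TT G N)" by (auto simp: TT_one TT_carrier)
next
  fix x y z assume "x \<in> carrier (TT G N)" "y \<in> carrier (TT G N)" "z \<in> carrier (TT G N)"
  then obtain a b c where "x = tcls G N a" "y = tcls G N b" "z = tcls G N c"
    by (auto simp: TT_carrier)
  then show "x \<otimes>\<^bsub>TT G N\<^esub> y \<otimes>\<^bsub>TT G N\<^esub> z = x \<otimes>\<^bsub>TT G N\<^esub> (y \<otimes>\<^bsub>TT G N\<^esub> z)"
    by (simp add: TT_mult_cls)
next
  fix x assume "x \<in> carrier (TT G N)"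
  then obtain a where "x = tcls G N a" by (auto simp: TT_carrier)
  then show "\<one>\<^bsub>TT G N\<^esub> \<otimes>\<^bsub>TT G N\<^esub> x = x" by (simp add: TT_mult_cls TT_one)
next
  fix x assume "x \<in> carrier (TT G N)"
  then obtain a where a: "a \<in> twords G N" "x = tcls G N a" by (auto simp: TT_carrier)
  have "tcls G N (winv a) \<in> carrier (TT G N)" using a twords_winv by (auto simp: TT_carrier)
  moreover have "tcls G N (winv a) \<otimes>\<^bsub>TT G N\<^esub> x = \<one>\<^bsub>TT G N\<^esub>"
    using a winv_cancel by (simp add: TT_mult_cls TT_one tcls_eq_iff)
  ultimately show "\<exists>y\<in>carrier (TT G N). y \<otimes>\<^bsub>TT G N\<^esub> x = \<one>\<^bsub>TT G N\<^esub>" by blast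
qed

lemma TT_pow: "tcls G N w [^]\<^bsub>TT G N\<^esub> (n::nat) = tcls G N (wpow w n)"
proof (induction n)
  case 0 then show ?case by (simp add: wpow_def TT_one)
next
  case (Suc n)
  have "tcls G N w [^]\<^bsub>TT G N\<^esub> Suc n = tcls G N (wpow w n) \<otimes>\<^bsub>TT G N\<^esub> tcls G N w"
    using Suc by simp
  also have "\<dots> = tcls G N (wpow w n @ w)" by (simp add: TT_mult_cls)
  also have "wpow w n @ w = wpow w (Suc n)"
    by (simp add: wpow_def replicate_append_same[symmetric])
  finally show ?case .
qed

context group begin

lemma cj_closed[simp]: "h \<in> carrier G \<Longrightarrow> x \<in> carrier G \<Longrightarrow> conjg G h x \<in> carrier G"
  by (simp add: conjg_def)
lemma comm_closed[simp]: "h \<in> carrier G \<Longrightarrow> x \<in> carrier G \<Longrightarrow> comm G h x \<in> carrier G"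
  by (simp add: comm_def)
lemma cj_mult: "h \<in> carrier G \<Longrightarrow> x \<in> carrier G \<Longrightarrow> y \<in> carrier G \<Longrightarrow>
    conjg G h (x \<otimes> y) = conjg G h x \<otimes> conjg G h y"
  by (simp add: conjg_def m_assoc inv_l_cancel_assoc)
lemma cj_cj: "h \<in> carrier G \<Longrightarrow> k \<in> carrier G \<Longrightarrow> x \<in> carrier G \<Longrightarrow>
    conjg G h (conjg G k x) = conjg G (h \<otimes> k) x"
  by (simp add: conjg_def m_assoc inv_mult_group)
lemma cj_cj2: "h \<in> carrier G \<Longrightarrow> k \<in> carrier G \<Longrightarrow> x \<in> carrier G \<Longrightarrow>
    conjg G (conjg G h k) (conjg G h x) = conjg G (h \<otimes> k) x"
  by (simp add: conjg_def m_assoc inv_mult_group inv_l_cancel_assoc)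
lemma cj_one[simp]: "x \<in> carrier G \<Longrightarrow> conjg G \<one> x = x"
  by (simp add: conjg_def)
lemma cj_inv_cancel[simp]: "h \<in> carrier G \<Longrightarrow> x \<in> carrier G \<Longrightarrow> conjg G h (conjg G (inv h) x) = x"
  by (simp add: conjg_def m_assoc inv_l_cancel_assoc inv_r_cancel_assoc)
lemma cj_inv_cancel2[simp]: "h \<in> carrier G \<Longrightarrow> x \<in> carrier G \<Longrightarrow> conjg G (inv h) (conjg G h x) = x"
  by (simp add: conjg_def m_assoc inv_l_cancel_assoc inv_r_cancel_assoc)
lemma cj_inv_elem: "h \<in> carrier G \<Longrightarrow> x \<in> carrier G \<Longrightarrow> conjg G h (inv x) = inv (conjg G h x)"
  by (simp add: conjg_def m_assoc inv_mult_group)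
lemma cj_self[simp]: "x \<in> carrier G \<Longrightarrow> conjg G x x = x"
  by (simp add: conjg_def m_assoc)
lemma cj_pow_self[simp]: "x \<in> carrier G \<Longrightarrow> conjg G (x [^] (n::nat)) x = x"
proof -
  assume x: "x \<in> carrier G"
  have "x [^] n \<otimes> x = x \<otimes> x [^] n" using x nat_pow_Suc2[of x n] by simp
  then show ?thesis using x by (simp add: conjg_def m_assoc)
qed
lemma comm_cj: "y \<in> carrier G \<Longrightarrow> h \<in> carrier G \<Longrightarrow> comm G y h = conjg G y h \<otimes> inv h"
  by (simp add: comm_def conjg_def)

end

locale tens = group + fixes N :: "'a set" assumes nN: "N \<lhd> G"
begin

abbreviation T where "T \<equiv> TT G N"

lemma T_group: "group T" by (rule group_TT)

sublocale T: group T by (rule group_TT)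

lemma N_sg: "subgroup N G" by (rule normal_imp_subgroup[OF nN])
lemma N_sub: "N \<subseteq> carrier G" by (rule subgroup.subset[OF N_sg])
lemma N_carr[simp]: "x \<in> N \<Longrightarrow> x \<in> carrier G" using N_sub by auto
lemma N_mult[simp]: "x \<in> N \<Longrightarrow> y \<in> N \<Longrightarrow> x \<otimes> y \<in> N" by (rule subgroup.m_closed[OF N_sg])
lemma N_inv[simp]: "x \<in> N \<Longrightarrow> inv x \<in> N" by (rule subgroup.m_inv_closed[OF N_sg])
lemma N_one[simp]: "\<one> \<in> N" by (rule subgroup.one_closed[OF N_sg])
lemma N_cj[simp]: "x \<in> N \<Longrightarrow> h \<in> carrier G \<Longrightarrow> conjg G h x \<in> N"
  unfolding conjg_def by (rule normal.inv_op_closed2[OF nN])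

abbreviation gn where "gn x g \<equiv> gen G N x g"

lemma gen_carrier[simp]: "x \<in> N \<Longrightarrow> g \<in> carrier G \<Longrightarrow> gn x g \<in> carrier T"
  unfolding gen_def TT_carrier by (rule imageI) simp

lemma R1: "x \<in> N \<Longrightarrow> x' \<in> N \<Longrightarrow> g \<in> carrier G \<Longrightarrow>
    gn (x \<otimes> x') g = gn (conjg G x x') (conjg G x g) \<otimes>\<^bsub>T\<^esub> gn x g"
  unfolding gen_def TT_mult_cls using tensor_eq.rel1[of x N x' g G] by (simp add: tcls_eq_iff)

lemma R2: "x \<in> N \<Longrightarrow> g \<in> carrier G \<Longrightarrow> g' \<in> carrier G \<Longrightarrow>
    gn x (g \<otimes> g') = gn x g \<otimes>\<^bsub>T\<^esub> gn (conjg G g x) (conjg G g g')"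
  unfolding gen_def TT_mult_cls using tensor_eq.rel2[of x N g G g'] by (simp add: tcls_eq_iff)

lemma gen_one1[simp]: "g \<in> carrier G \<Longrightarrow> gn \<one> g = \<one>\<^bsub>T\<^esub>"
proof -
  assume g: "g \<in> carrier G"
  have r: "gn (\<one> \<otimes> \<one>) g = gn (conjg G \<one> \<one>) (conjg G \<one> g) \<otimes>\<^bsub>T\<^esub> gn \<one> g"
    by (rule R1) (use g in simp_all)
  have "gn \<one> g = gn \<one> g \<otimes>\<^bsub>T\<^esub> gn \<one> g"
    using r by (simp only: l_one one_closed cj_one g)
  moreover have c: "gn \<one> g \<in> carrier T" using g by simp
  ultimately show ?thesis using T.l_cancel_one'[OF c c] by blast
qed

lemma gen_one2[simp]: "x \<in> N \<Longrightarrow> gn x \<one> = \<one>\<^bsub>T\<^esub>"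
proof -
  assume x: "x \<in> N"
  have xc: "x \<in> carrier G" using x by simp
  have r: "gn x (\<one> \<otimes> \<one>) = gn x \<one> \<otimes>\<^bsub>T\<^esub> gn (conjg G \<one> x) (conjg G \<one> \<one>)"
    by (rule R2) (use x in simp_all)
  have "gn x \<one> = gn x \<one> \<otimes>\<^bsub>T\<^esub> gn x \<one>"
    using r by (simp only: l_one one_closed cj_one xc)
  moreover have c: "gn x \<one> \<in> carrier T" using x by simp
  ultimately show ?thesis using T.l_cancel_one'[OF c c] by blast
qed

lemma gen_inv2: "x \<in> N \<Longrightarrow> g \<in> carrier G \<Longrightarrow> gn x (inv g) = inv\<^bsub>T\<^esub> (gn (conjg G (inv g) x) g)"
proof -
  assume x: "x \<in> N" and g: "g \<in> carrier G"
  have r: "gn x (inv g \<otimes> g) = gn x (inv g) \<otimes>\<^bsub>T\<^esub> gn (conjg G (inv g) x) (conjg G (inv g) g)"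
    by (rule R2) (use x g in simp_all)
  have cg: "conjg G (inv g) g = g" using g by (simp add: conjg_def m_assoc)
  have ig: "inv g \<otimes> g = \<one>" using g by simp
  have "\<one>\<^bsub>T\<^esub> = gn x (inv g) \<otimes>\<^bsub>T\<^esub> gn (conjg G (inv g) x) g"
    using r by (simp only: cg ig gen_one2[OF x])
  then have e: "gn x (inv g) \<otimes>\<^bsub>T\<^esub> gn (conjg G (inv g) x) g = \<one>\<^bsub>T\<^esub>" by (rule HOL.sym)
  have c1: "gn (conjg G (inv g) x) g \<in> carrier T" using x g by simp
  have c2: "gn x (inv g) \<in> carrier T" using x g by simp
  have "inv\<^bsub>T\<^esub> (gn (conjg G (inv g) x) g) = gn x (inv g)"
    by (rule T.inv_equality[OF e c1 c2])
  then show ?thesis by (rule HOL.sym)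
qed

lemma I1:
  assumes x: "x \<in> N" and y: "y \<in> N" and g: "g \<in> carrier G" and h: "h \<in> carrier G"
  shows "gn x g \<otimes>\<^bsub>T\<^esub> gn y h \<otimes>\<^bsub>T\<^esub> inv\<^bsub>T\<^esub> (gn x g)
       = gn (conjg G (comm G x g) y) (conjg G (comm G x g) h)"
proof -
  have xc: "x \<in> carrier G" using x by simp
  define q where "q = inv (g \<otimes> x)"
  have qc: "q \<in> carrier G" using xc g by (simp add: q_def)
  define y' where "y' = conjg G q y"
  define h' where "h' = conjg G q h"
  have y': "y' \<in> N" using y qc by (simp add: y'_def)
  have h': "h' \<in> carrier G" using h qc by (simp add: h'_def)
  let ?A = "gn (conjg G x y') (conjg G x g)"
  let ?B1 = "gn (conjg G (x \<otimes> g) y') (conjg G (x \<otimes> g) h')"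
  let ?B2 = "gn (conjg G (g \<otimes> x) y') (conjg G (g \<otimes> x) h')"
  let ?a = "gn x g"
  let ?D = "gn (conjg G g x) (conjg G g h')"
  have cA: "?A \<in> carrier T" using x y' g by simp
  have cB1: "?B1 \<in> carrier T" using x y' g h' by simp
  have cB2: "?B2 \<in> carrier T" using x y' g h' by simp
  have ca: "?a \<in> carrier T" using x g by simp
  have cD: "?D \<in> carrier T" using x g h' by simp
  have w1: "gn (x \<otimes> y') (g \<otimes> h') = ?A \<otimes>\<^bsub>T\<^esub> ?B1 \<otimes>\<^bsub>T\<^esub> (?a \<otimes>\<^bsub>T\<^esub> ?D)"
  proof -
    have "gn (x \<otimes> y') (g \<otimes> h') = gn (conjg G x y') (conjg G x (g \<otimes> h')) \<otimes>\<^bsub>T\<^esub> gn x (g \<otimes> h')"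
      using R1[of x y' "g \<otimes> h'"] x y' g h' by simp
    also have "conjg G x (g \<otimes> h') = conjg G x g \<otimes> conjg G x h'" using xc g h' by (simp add: cj_mult)
    also have "gn (conjg G x y') (conjg G x g \<otimes> conjg G x h')
        = ?A \<otimes>\<^bsub>T\<^esub> gn (conjg G (conjg G x g) (conjg G x y')) (conjg G (conjg G x g) (conjg G x h'))"
      using R2[of "conjg G x y'" "conjg G x g" "conjg G x h'"] x y' g h' by simp
    also have "conjg G (conjg G x g) (conjg G x y') = conjg G (x \<otimes> g) y'" using xc g y' by (simp add: cj_cj2)
    also have "conjg G (conjg G x g) (conjg G x h') = conjg G (x \<otimes> g) h'" using xc g h' by (simp add: cj_cj2)
    also have "gn x (g \<otimes> h') = ?a \<otimes>\<^bsub>T\<^esub> ?D" using R2[of x g h'] x g h' by simp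
    finally show ?thesis .
  qed
  have w2: "gn (x \<otimes> y') (g \<otimes> h') = ?A \<otimes>\<^bsub>T\<^esub> ?a \<otimes>\<^bsub>T\<^esub> (?B2 \<otimes>\<^bsub>T\<^esub> ?D)"
  proof -
    have "gn (x \<otimes> y') (g \<otimes> h') = gn (x \<otimes> y') g \<otimes>\<^bsub>T\<^esub> gn (conjg G g (x \<otimes> y')) (conjg G g h')"
      using R2[of "x \<otimes> y'" g h'] x y' g h' by simp
    also have "gn (x \<otimes> y') g = ?A \<otimes>\<^bsub>T\<^esub> ?a" using R1[of x y' g] x y' g by simp
    also have "conjg G g (x \<otimes> y') = conjg G g x \<otimes> conjg G g y'" using xc g y' by (simp add: cj_mult)
    also have "gn (conjg G g x \<otimes> conjg G g y') (conjg G g h')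
       = gn (conjg G (conjg G g x) (conjg G g y')) (conjg G (conjg G g x) (conjg G g h')) \<otimes>\<^bsub>T\<^esub> ?D"
      using R1[of "conjg G g x" "conjg G g y'" "conjg G g h'"] x y' g h' by simp
    also have "conjg G (conjg G g x) (conjg G g y') = conjg G (g \<otimes> x) y'" using xc g y' by (simp add: cj_cj2)
    also have "conjg G (conjg G g x) (conjg G g h') = conjg G (g \<otimes> x) h'" using xc g h' by (simp add: cj_cj2)
    finally show ?thesis .
  qed
  have s1: "?A \<otimes>\<^bsub>T\<^esub> (?B1 \<otimes>\<^bsub>T\<^esub> (?a \<otimes>\<^bsub>T\<^esub> ?D)) = ?A \<otimes>\<^bsub>T\<^esub> (?a \<otimes>\<^bsub>T\<^esub> (?B2 \<otimes>\<^bsub>T\<^esub> ?D))"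
    using HOL.trans[OF w1[symmetric] w2] cA cB1 cB2 ca cD by (simp add: T.m_assoc)
  have s2: "?B1 \<otimes>\<^bsub>T\<^esub> (?a \<otimes>\<^bsub>T\<^esub> ?D) = ?a \<otimes>\<^bsub>T\<^esub> (?B2 \<otimes>\<^bsub>T\<^esub> ?D)"
    using T.l_cancel[OF s1] cA cB1 cB2 ca cD by simp
  have s3: "(?B1 \<otimes>\<^bsub>T\<^esub> ?a) \<otimes>\<^bsub>T\<^esub> ?D = (?a \<otimes>\<^bsub>T\<^esub> ?B2) \<otimes>\<^bsub>T\<^esub> ?D"
    using s2 cA cB1 cB2 ca cD by (simp add: T.m_assoc)
  have s4: "?B1 \<otimes>\<^bsub>T\<^esub> ?a = ?a \<otimes>\<^bsub>T\<^esub> ?B2"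
    using T.right_cancel[THEN iffD1, OF _ _ _ s3] cA cB1 cB2 ca cD by simp
  have e: "?a \<otimes>\<^bsub>T\<^esub> ?B2 \<otimes>\<^bsub>T\<^esub> inv\<^bsub>T\<^esub> ?a = ?B1"
  proof -
    have "?a \<otimes>\<^bsub>T\<^esub> ?B2 \<otimes>\<^bsub>T\<^esub> inv\<^bsub>T\<^esub> ?a = ?B1 \<otimes>\<^bsub>T\<^esub> ?a \<otimes>\<^bsub>T\<^esub> inv\<^bsub>T\<^esub> ?a"
      by (simp only: s4)
    also have "\<dots> = ?B1" using cB1 ca by (simp add: T.m_assoc)
    finally show ?thesis .
  qed
  have f1: "conjg G (g \<otimes> x) y' = y" using xc g y by (simp add: y'_def q_def)
  have f2: "conjg G (g \<otimes> x) h' = h" using xc g h by (simp add: h'_def q_def)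
  have f3: "conjg G (x \<otimes> g) y' = conjg G (comm G x g) y"
    using xc g y by (simp add: y'_def q_def cj_cj comm_def inv_mult_group m_assoc)
  have f4: "conjg G (x \<otimes> g) h' = conjg G (comm G x g) h"
    using xc g h by (simp add: h'_def q_def cj_cj comm_def inv_mult_group m_assoc)
  show ?thesis using e by (simp only: f1 f2 f3 f4)
qed

end

context tens begin

lemma D:
  assumes k: "k \<in> N" and y: "y \<in> N" and h: "h \<in> carrier G"
  shows "gn (conjg G k y) (conjg G k h) = gn k (comm G y h) \<otimes>\<^bsub>T\<^esub> gn y h"
proof -
  have kc: "k \<in> carrier G" and yc: "y \<in> carrier G" using k y by simp_all
  define w where "w = conjg G y h"
  define c where "c = comm G y h"
  have wc: "w \<in> carrier G" using yc h by (simp add: w_def)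
  have cc: "c \<in> carrier G" using yc h by (simp add: c_def)
  have c_eq: "c = w \<otimes> inv h" using yc h by (simp add: c_def w_def comm_cj)
  let ?a = "gn y h"
  let ?b = "gn k h"
  let ?W = "gn k w"
  let ?P = "gn (conjg G k y) (conjg G k h)"
  have ca: "?a \<in> carrier T" and cb: "?b \<in> carrier T" and cW: "?W \<in> carrier T" and cP: "?P \<in> carrier T"
    using k y h wc kc by simp_all
  have r1: "gn k (w \<otimes> inv h) = ?W \<otimes>\<^bsub>T\<^esub> gn (conjg G w k) (conjg G w (inv h))"
    by (rule R2) (use k wc h in simp_all)
  have e1: "conjg G w (inv h) = inv (conjg G w h)" using wc h by (simp add: cj_inv_elem)
  have r2: "gn (conjg G w k) (inv (conjg G w h))
      = inv\<^bsub>T\<^esub> (gn (conjg G (inv (conjg G w h)) (conjg G w k)) (conjg G w h))"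
    by (rule gen_inv2) (use k wc h in simp_all)
  have e2: "inv (conjg G w h) \<otimes> w = c" using wc h c_eq
    by (simp add: conjg_def inv_mult_group m_assoc)
  have e3: "conjg G (inv (conjg G w h)) (conjg G w k) = conjg G c k"
    using wc h kc e2 by (simp add: cj_cj)
  have e4: "conjg G w h = conjg G c h"
    using wc h c_eq by (simp add: conjg_def inv_mult_group m_assoc)
  have i1: "?a \<otimes>\<^bsub>T\<^esub> ?b \<otimes>\<^bsub>T\<^esub> inv\<^bsub>T\<^esub> ?a = gn (conjg G c k) (conjg G c h)"
    unfolding c_def by (rule I1) (use y k h in simp_all)
  have gkc: "gn k c = ?W \<otimes>\<^bsub>T\<^esub> inv\<^bsub>T\<^esub> (?a \<otimes>\<^bsub>T\<^esub> ?b \<otimes>\<^bsub>T\<^esub> inv\<^bsub>T\<^esub> ?a)"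
  proof -
    have "gn k c = gn k (w \<otimes> inv h)" by (simp only: c_eq)
    also have "\<dots> = ?W \<otimes>\<^bsub>T\<^esub> gn (conjg G w k) (inv (conjg G w h))" by (simp only: r1 e1)
    also have "\<dots> = ?W \<otimes>\<^bsub>T\<^esub> inv\<^bsub>T\<^esub> (gn (conjg G c k) (conjg G c h))" by (simp only: r2, simp only: e3, simp only: e4)
    also have "\<dots> = ?W \<otimes>\<^bsub>T\<^esub> inv\<^bsub>T\<^esub> (?a \<otimes>\<^bsub>T\<^esub> ?b \<otimes>\<^bsub>T\<^esub> inv\<^bsub>T\<^esub> ?a)" by (simp only: i1)
    finally show ?thesis .
  qed
  define k2 where "k2 = conjg G (inv y) k"
  have k2: "k2 \<in> N" using k yc by (simp add: k2_def)
  have ky: "k \<otimes> y = y \<otimes> k2" using kc yc by (simp add: k2_def conjg_def m_assoc inv_r_cancel_assoc)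
  have r3: "gn (k \<otimes> y) h = ?P \<otimes>\<^bsub>T\<^esub> ?b" by (rule R1) (use k y h in simp_all)
  have r4: "gn (y \<otimes> k2) h = gn (conjg G y k2) (conjg G y h) \<otimes>\<^bsub>T\<^esub> ?a" by (rule R1) (use k2 y h in simp_all)
  have e5: "conjg G y k2 = k" using kc yc by (simp add: k2_def)
  have Pb: "?P \<otimes>\<^bsub>T\<^esub> ?b = ?W \<otimes>\<^bsub>T\<^esub> ?a"
  proof -
    have "?P \<otimes>\<^bsub>T\<^esub> ?b = gn (k \<otimes> y) h" by (simp only: r3)
    also have "\<dots> = gn (y \<otimes> k2) h" by (simp only: ky)
    also have "\<dots> = ?W \<otimes>\<^bsub>T\<^esub> ?a" by (simp only: r4 e5 w_def)
    finally show ?thesis .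
  qed
  have P_eq: "?P = ?W \<otimes>\<^bsub>T\<^esub> ?a \<otimes>\<^bsub>T\<^esub> inv\<^bsub>T\<^esub> ?b"
    using T.inv_solve_right[of ?P "?W \<otimes>\<^bsub>T\<^esub> ?a" ?b] Pb cP cW ca cb by simp
  have inv3: "inv\<^bsub>T\<^esub> (?a \<otimes>\<^bsub>T\<^esub> ?b \<otimes>\<^bsub>T\<^esub> inv\<^bsub>T\<^esub> ?a) = ?a \<otimes>\<^bsub>T\<^esub> inv\<^bsub>T\<^esub> ?b \<otimes>\<^bsub>T\<^esub> inv\<^bsub>T\<^esub> ?a"
    using ca cb by (simp add: T.inv_mult_group T.m_assoc)
  have "gn k c \<otimes>\<^bsub>T\<^esub> ?a = ?W \<otimes>\<^bsub>T\<^esub> (?a \<otimes>\<^bsub>T\<^esub> inv\<^bsub>T\<^esub> ?b \<otimes>\<^bsub>T\<^esub> inv\<^bsub>T\<^esub> ?a) \<otimes>\<^bsub>T\<^esub> ?a"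
    by (simp only: gkc inv3)
  also have "\<dots> = ?W \<otimes>\<^bsub>T\<^esub> ?a \<otimes>\<^bsub>T\<^esub> inv\<^bsub>T\<^esub> ?b"
    using ca cb cW by (simp add: T.m_assoc)
  finally show ?thesis using P_eq by (simp add: c_def)
qed

end

lemma (in group) comm_in_normal1:
  assumes K: "K \<lhd> G" and x: "x \<in> K" and g: "g \<in> carrier G"
  shows "comm G x g \<in> K"
proof -
  have xc: "x \<in> carrier G" using subgroup.mem_carrier[OF normal_imp_subgroup[OF K] x] .
  have "comm G x g = x \<otimes> (g \<otimes> inv x \<otimes> inv g)" using xc g by (simp add: comm_def m_assoc)
  moreover have "g \<otimes> inv x \<otimes> inv g \<in> K"
    using normal.inv_op_closed2[OF K g] subgroup.m_inv_closed[OF normal_imp_subgroup[OF K] x] by simp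
  ultimately show ?thesis using subgroup.m_closed[OF normal_imp_subgroup[OF K] x] by simp
qed

lemma (in group) comm_in_normal2:
  assumes K: "K \<lhd> G" and x: "x \<in> carrier G" and g: "g \<in> K"
  shows "comm G x g \<in> K"
proof -
  have gc: "g \<in> carrier G" using subgroup.mem_carrier[OF normal_imp_subgroup[OF K] g] .
  have "comm G x g = (x \<otimes> g \<otimes> inv x) \<otimes> inv g" using x gc by (simp add: comm_def m_assoc)
  moreover have "x \<otimes> g \<otimes> inv x \<in> K" using normal.inv_op_closed2[OF K x g] .
  moreover have "inv g \<in> K" using subgroup.m_inv_closed[OF normal_imp_subgroup[OF K] g] .
  ultimately show ?thesis using subgroup.m_closed[OF normal_imp_subgroup[OF K]] by simp
qed

context tens begin

definition gset :: "'a set \<Rightarrow> 'a tword set set" where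
  "gset K = {gn x g | x g. x \<in> K \<and> g \<in> carrier G} \<union> {gn x k | x k. x \<in> N \<and> k \<in> K}"

definition zset :: "'a set \<Rightarrow> 'a tword set set" where
  "zset K = {gn k c | k c. k \<in> K \<and> c \<in> K}"

lemma N_normal: "N \<lhd> G" by (rule nN)

lemma comm_N[simp]: "x \<in> N \<Longrightarrow> g \<in> carrier G \<Longrightarrow> comm G x g \<in> N"
  by (rule comm_in_normal1[OF nN])

lemma CJ:
  assumes x: "x \<in> N" and g: "g \<in> carrier G" and y: "y \<in> N" and h: "h \<in> carrier G"
  shows "gn x g \<otimes>\<^bsub>T\<^esub> gn y h \<otimes>\<^bsub>T\<^esub> inv\<^bsub>T\<^esub> (gn x g) = gn (comm G x g) (comm G y h) \<otimes>\<^bsub>T\<^esub> gn y h"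
proof -
  have "gn x g \<otimes>\<^bsub>T\<^esub> gn y h \<otimes>\<^bsub>T\<^esub> inv\<^bsub>T\<^esub> (gn x g) = gn (conjg G (comm G x g) y) (conjg G (comm G x g) h)"
    by (rule I1[OF x y g h])
  also have "\<dots> = gn (comm G x g) (comm G y h) \<otimes>\<^bsub>T\<^esub> gn y h"
    by (rule D) (use x g y h in simp_all)
  finally show ?thesis .
qed

lemma CM:
  assumes x: "x \<in> N" and g: "g \<in> carrier G" and y: "y \<in> N" and h: "h \<in> carrier G"
  shows "gn x g \<otimes>\<^bsub>T\<^esub> gn y h \<otimes>\<^bsub>T\<^esub> inv\<^bsub>T\<^esub> (gn x g) \<otimes>\<^bsub>T\<^esub> inv\<^bsub>T\<^esub> (gn y h) = gn (comm G x g) (comm G y h)"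
proof -
  have c: "gn (comm G x g) (comm G y h) \<in> carrier T" "gn y h \<in> carrier T" using x g y h by simp_all
  have "gn x g \<otimes>\<^bsub>T\<^esub> gn y h \<otimes>\<^bsub>T\<^esub> inv\<^bsub>T\<^esub> (gn x g) \<otimes>\<^bsub>T\<^esub> inv\<^bsub>T\<^esub> (gn y h)
      = gn (comm G x g) (comm G y h) \<otimes>\<^bsub>T\<^esub> gn y h \<otimes>\<^bsub>T\<^esub> inv\<^bsub>T\<^esub> (gn y h)"
    by (simp only: CJ[OF x g y h])
  also have "\<dots> = gn (comm G x g) (comm G y h)" using c by (simp add: T.m_assoc)
  finally show ?thesis .
qed

lemma gset_cases:
  assumes "t \<in> gset K" and "K \<subseteq> N"
  obtains x g where "t = gn x g" "x \<in> N" "g \<in> carrier G" "x \<in> K \<or> g \<in> K"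
proof -
  from assms(1) have "(\<exists>x g. t = gn x g \<and> x \<in> K \<and> g \<in> carrier G) \<or> (\<exists>x k. t = gn x k \<and> x \<in> N \<and> k \<in> K)"
    unfolding gset_def by simp
  then show thesis
  proof
    assume "\<exists>x g. t = gn x g \<and> x \<in> K \<and> g \<in> carrier G"
    then obtain x g where xg: "t = gn x g" "x \<in> K" "g \<in> carrier G" by auto
    have "x \<in> N" using xg assms(2) by auto
    then show thesis using that[of x g] xg by simp
  next
    assume "\<exists>x k. t = gn x k \<and> x \<in> N \<and> k \<in> K"
    then obtain x k where xk: "t = gn x k" "x \<in> N" "k \<in> K" by auto
    have "k \<in> carrier G" using xk assms(2) N_sub by auto
    then show thesis using that[of x k] xk by simp
  qed
qed

lemma gset_sub: "K \<subseteq> N \<Longrightarrow> gset K \<subseteq> carrier T"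
  unfolding gset_def by auto

lemma zset_sub: "K \<subseteq> N \<Longrightarrow> zset K \<subseteq> gset K"
  unfolding gset_def zset_def by auto

lemma gsetI1: "x \<in> K \<Longrightarrow> g \<in> carrier G \<Longrightarrow> gn x g \<in> gset K"
  unfolding gset_def by auto
lemma gsetI2: "x \<in> N \<Longrightarrow> k \<in> K \<Longrightarrow> gn x k \<in> gset K"
  unfolding gset_def by auto

lemma inv_gen_cls: "x \<in> N \<Longrightarrow> g \<in> carrier G \<Longrightarrow> inv\<^bsub>T\<^esub> (gn x g) = tcls G N [(x, g, True)]"
proof -
  assume x: "x \<in> N" and g: "g \<in> carrier G"
  have c1: "tcls G N [(x, g, True)] \<in> carrier T" using x g unfolding TT_carrier by (intro imageI) simp
  have "tcls G N [(x, g, True)] \<otimes>\<^bsub>T\<^esub> gn x g = \<one>\<^bsub>T\<^esub>"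
    unfolding gen_def TT_mult_cls TT_one tcls_eq_iff
    using tensor_eq.cancel[of G N "(x, g, True)"] by simp
  then show ?thesis by (rule T.inv_equality) (use c1 x g in simp_all)
qed

lemma carrier_T_gen: "carrier T \<subseteq> generate T (gset N)"
proof
  fix u assume "u \<in> carrier T"
  then obtain w where w: "w \<in> twords G N" "u = tcls G N w" by (auto simp: TT_carrier)
  have "tcls G N w \<in> generate T (gset N)" using w(1)
  proof (induction w)
    case Nil then show ?case using generate.one[of T "gset N"] by (simp add: TT_one)
  next
    case (Cons l w)
    obtain x g b where l: "l = (x, g, b)" by (cases l) auto
    have xg: "x \<in> N" "g \<in> carrier G" and ww: "w \<in> twords G N" using Cons.prems l by auto
    have "tcls G N (l # w) = tcls G N [l] \<otimes>\<^bsub>T\<^esub> tcls G N w" by (simp add: TT_mult_cls)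
    moreover have "tcls G N [l] \<in> generate T (gset N)"
    proof (cases b)
      case True
      have "tcls G N [l] = inv\<^bsub>T\<^esub> (gn x g)" using inv_gen_cls[OF xg] l True by simp
      then show ?thesis using gsetI1[OF xg] by (simp add: generate.inv)
    next
      case False
      have "tcls G N [l] = gn x g" using l False by (simp add: gen_def)
      then show ?thesis using gsetI1[OF xg] by (simp add: generate.incl)
    qed
    ultimately show ?case using Cons.IH[OF ww] by (simp add: generate.eng)
  qed
  then show "u \<in> generate T (gset N)" using w by simp
qed

lemma H_normal:
  assumes K2: "K2 \<lhd> G" and K2N: "K2 \<subseteq> N"
  shows "generate T (gset K2) \<lhd> T"
proof (rule T.normal_invI)
  show "subgroup (generate T (gset K2)) T"
    by (rule T.generate_is_subgroup[OF gset_sub[OF K2N]])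
next
  fix u h assume u: "u \<in> carrier T" and h: "h \<in> generate T (gset K2)"
  have cj: "gn (conjg G c y) (conjg G c h0) \<in> gset K2"
    if c: "c \<in> carrier G" and t: "gn y h0 \<in> gset K2" "y \<in> N" "h0 \<in> carrier G" "y \<in> K2 \<or> h0 \<in> K2" for c y h0
  proof (cases "y \<in> K2")
    case True
    have "conjg G c y \<in> K2" unfolding conjg_def using normal.inv_op_closed2[OF K2 c True] .
    then show ?thesis using c t by (intro gsetI1) simp_all
  next
    case False
    then have h0: "h0 \<in> K2" using t by simp
    have "conjg G c h0 \<in> K2" unfolding conjg_def using normal.inv_op_closed2[OF K2 c h0] .
    then show ?thesis using c t by (intro gsetI2) simp_all
  qed
  show "u \<otimes>\<^bsub>T\<^esub> h \<otimes>\<^bsub>T\<^esub> inv\<^bsub>T\<^esub> u \<in> generate T (gset K2)"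
  proof (rule T.conj_closure[OF gset_sub[OF order_refl] gset_sub[OF K2N] _ _ _ h])
    show "u \<in> generate T (gset N)" using u carrier_T_gen by auto
  next
    fix s t assume s: "s \<in> gset N" and t: "t \<in> gset K2"
    obtain x g where sx: "s = gn x g" "x \<in> N" "g \<in> carrier G" "x \<in> N \<or> g \<in> N"
      by (rule gset_cases[OF s order_refl])
    obtain y h0 where ty: "t = gn y h0" "y \<in> N" "h0 \<in> carrier G" "y \<in> K2 \<or> h0 \<in> K2"
      by (rule gset_cases[OF t K2N])
    have "s \<otimes>\<^bsub>T\<^esub> t \<otimes>\<^bsub>T\<^esub> inv\<^bsub>T\<^esub> s = gn (conjg G (comm G x g) y) (conjg G (comm G x g) h0)"
      using I1[of x y g h0] sx ty by simp
    then show "s \<otimes>\<^bsub>T\<^esub> t \<otimes>\<^bsub>T\<^esub> inv\<^bsub>T\<^esub> s \<in> gset K2"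
      using cj[of "comm G x g" y h0] sx ty t by simp
  next
    fix s t assume s: "s \<in> gset N" and t: "t \<in> gset K2"
    obtain x g where sx: "s = gn x g" "x \<in> N" "g \<in> carrier G" "x \<in> N \<or> g \<in> N"
      by (rule gset_cases[OF s order_refl])
    obtain y h0 where ty: "t = gn y h0" "y \<in> N" "h0 \<in> carrier G" "y \<in> K2 \<or> h0 \<in> K2"
      by (rule gset_cases[OF t K2N])
    define c where "c = comm G x g"
    have cc: "c \<in> carrier G" "inv c \<in> carrier G" using sx by (simp_all add: c_def)
    let ?t' = "gn (conjg G (inv c) y) (conjg G (inv c) h0)"
    have t': "?t' \<in> gset K2" using cj[OF cc(2) _ ty(2-4)] ty t by simp
    have ct': "?t' \<in> carrier T" using ty cc by simp
    have cs: "s \<in> carrier T" using sx by simp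
    have "s \<otimes>\<^bsub>T\<^esub> ?t' \<otimes>\<^bsub>T\<^esub> inv\<^bsub>T\<^esub> s = gn (conjg G c (conjg G (inv c) y)) (conjg G c (conjg G (inv c) h0))"
      using I1[of x "conjg G (inv c) y" g "conjg G (inv c) h0"] sx ty cc by (simp add: c_def)
    also have "\<dots> = t" using ty cc by simp
    finally have e: "s \<otimes>\<^bsub>T\<^esub> ?t' \<otimes>\<^bsub>T\<^esub> inv\<^bsub>T\<^esub> s = t" .
    have "inv\<^bsub>T\<^esub> s \<otimes>\<^bsub>T\<^esub> t \<otimes>\<^bsub>T\<^esub> s = inv\<^bsub>T\<^esub> s \<otimes>\<^bsub>T\<^esub> (s \<otimes>\<^bsub>T\<^esub> ?t' \<otimes>\<^bsub>T\<^esub> inv\<^bsub>T\<^esub> s) \<otimes>\<^bsub>T\<^esub> s"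
      by (simp only: e)
    also have "\<dots> = ?t'" using cs ct' by (simp add: T.m_assoc T.inv_l_cancel_assoc)
    finally show "inv\<^bsub>T\<^esub> s \<otimes>\<^bsub>T\<^esub> t \<otimes>\<^bsub>T\<^esub> s \<in> gset K2" using t' by simp
  qed
qed

end

context tens begin

lemma N_pow[simp]: "x \<in> N \<Longrightarrow> x [^] (n::nat) \<in> N"
  by (induction n) simp_all

lemma step:
  fixes e m :: nat
  assumes K: "K \<lhd> G" and KN: "K \<subseteq> N" and K2: "K2 \<lhd> G" and K2N: "K2 \<subseteq> N"
    and commK: "\<And>k c. k \<in> K \<Longrightarrow> c \<in> K \<Longrightarrow> comm G k c \<in> K2"
    and ex: "\<And>x. x \<in> N \<Longrightarrow> x [^] e = \<one>"
    and m: "m = (if odd e then e else 2 * e)"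
    and u: "u \<in> generate T (gset K)"
  shows "u [^]\<^bsub>T\<^esub> m \<in> generate T (gset K2)"
proof -
  define H where "H = generate T (gset K2)"
  have HN: "H \<lhd> T" unfolding H_def by (rule H_normal[OF K2 K2N])
  interpret HT: normal H T by (rule HN)
  define Q where "Q = T Mod H"
  have Qg: "group Q" unfolding Q_def by (rule HT.factorgroup_is_group)
  interpret Q: group Q by (rule Qg)
  define p where "p = (\<lambda>a. H #>\<^bsub>T\<^esub> a)"
  have phom: "p \<in> hom T Q" unfolding p_def Q_def by (rule HT.r_coset_hom_Mod)
  interpret P: group_hom T Q p by (intro group_hom.intro group_hom_axioms.intro T_group Qg phom)
  have Hsub: "subgroup H T" using HT.subgroup_axioms .
  have pH: "p a = \<one>\<^bsub>Q\<^esub>" if "a \<in> H" for a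
    using subgroup.rcos_const[OF Hsub T_group that] unfolding p_def Q_def by simp
  have p1: "a \<in> H" if a: "a \<in> carrier T" and pa: "p a = \<one>\<^bsub>Q\<^esub>" for a
  proof -
    have "a \<in> H #>\<^bsub>T\<^esub> a" by (rule T.rcos_self[OF a Hsub])
    then show ?thesis using pa unfolding p_def Q_def by simp
  qed
  have Kc: "K \<subseteq> carrier G" using KN N_sub by auto
  have pc: "p a \<in> carrier Q" if "a \<in> carrier T" for a using that by simp
  have inK2: "gn y h \<in> H" if "y \<in> N" "h \<in> K2" for y h
    unfolding H_def using gsetI2[OF that] by (rule generate.incl)
  have lin: "p (gn (k [^] n) c) = p (gn k c) [^]\<^bsub>Q\<^esub> n" if k: "k \<in> K" and c: "c \<in> K" for k c and n :: nat
  proof (induction n)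
    case 0
    have "c \<in> carrier G" using c Kc by auto
    then show ?case using pH[of "\<one>\<^bsub>T\<^esub>"] HT.one_closed by simp
  next
    case (Suc n)
    have kN: "k \<in> N" and cG: "c \<in> carrier G" and kc: "k \<in> carrier G" using k c KN Kc by auto
    have r: "gn (k [^] n \<otimes> k) c = gn (conjg G (k [^] n) k) (conjg G (k [^] n) c) \<otimes>\<^bsub>T\<^esub> gn (k [^] n) c"
      by (rule R1) (use kN cG in simp_all)
    have d: "gn (conjg G (k [^] n) k) (conjg G (k [^] n) c) = gn (k [^] n) (comm G k c) \<otimes>\<^bsub>T\<^esub> gn k c"
      by (rule D) (use kN cG in simp_all)
    have j: "gn (k [^] n) (comm G k c) \<in> H" using inK2 commK[OF k c] kN by simp
    have "p (gn (k [^] Suc n) c) = p (gn (k [^] n) (comm G k c) \<otimes>\<^bsub>T\<^esub> gn k c \<otimes>\<^bsub>T\<^esub> gn (k [^] n) c)"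
      using r d by simp
    also have "\<dots> = p (gn (k [^] n) (comm G k c)) \<otimes>\<^bsub>Q\<^esub> p (gn k c) \<otimes>\<^bsub>Q\<^esub> p (gn (k [^] n) c)"
      using kN cG kc commK[OF k c] by simp
    also have "\<dots> = p (gn k c) \<otimes>\<^bsub>Q\<^esub> p (gn k c) [^]\<^bsub>Q\<^esub> n"
      using pH[OF j] Suc kN cG by simp
    also have "\<dots> = p (gn k c) [^]\<^bsub>Q\<^esub> Suc n"
      by (rule HOL.sym, rule Q.nat_pow_Suc2) (use kN cG in simp)
    finally show ?case .
  qed
  have gK: "gset K \<subseteq> carrier T" by (rule gset_sub[OF KN])
  have commgK: "comm G x g \<in> K" if "x \<in> N" "g \<in> carrier G" "x \<in> K \<or> g \<in> K" for x g
  proof (cases "x \<in> K")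
    case True show ?thesis using comm_in_normal1[OF K True that(2)] .
  next
    case False then have "g \<in> K" using that by simp
    then show ?thesis using comm_in_normal2[OF K _ ] that by simp
  qed
  have zset_cases: "\<exists>k c. z = gn k c \<and> k \<in> K \<and> c \<in> K" if "z \<in> zset K" for z
    using that unfolding zset_def by simp
  have cent0: "p a \<otimes>\<^bsub>Q\<^esub> p z = p z \<otimes>\<^bsub>Q\<^esub> p a" if a: "a \<in> gset K" and z: "z \<in> zset K" for a z
  proof -
    obtain x g where ax: "a = gn x g" "x \<in> N" "g \<in> carrier G" "x \<in> K \<or> g \<in> K"
      by (rule gset_cases[OF a KN])
    obtain k c where zk: "z = gn k c" "k \<in> K" "c \<in> K" using zset_cases[OF z] by auto
    have kN: "k \<in> N" and cG: "c \<in> carrier G" using zk KN Kc by auto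
    have cj: "a \<otimes>\<^bsub>T\<^esub> z \<otimes>\<^bsub>T\<^esub> inv\<^bsub>T\<^esub> a = gn (comm G x g) (comm G k c) \<otimes>\<^bsub>T\<^esub> z"
      using CJ[OF ax(2) ax(3) kN cG] ax zk by simp
    have j: "gn (comm G x g) (comm G k c) \<in> H" using inK2 commK[OF zk(2) zk(3)] ax by simp
    have ca: "a \<in> carrier T" and cz: "z \<in> carrier T" using ax zk kN cG by simp_all
    have e1: "p a \<otimes>\<^bsub>Q\<^esub> p z \<otimes>\<^bsub>Q\<^esub> inv\<^bsub>Q\<^esub> (p a) = p z"
    proof -
      have "p a \<otimes>\<^bsub>Q\<^esub> p z \<otimes>\<^bsub>Q\<^esub> inv\<^bsub>Q\<^esub> (p a) = p (a \<otimes>\<^bsub>T\<^esub> z \<otimes>\<^bsub>T\<^esub> inv\<^bsub>T\<^esub> a)"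
        using ca cz by simp
      also have "\<dots> = p (gn (comm G x g) (comm G k c)) \<otimes>\<^bsub>Q\<^esub> p z"
        using cj ax kN cG cz by simp
      also have "\<dots> = p z" using pH[OF j] cz by simp
      finally show ?thesis .
    qed
    have "p a \<otimes>\<^bsub>Q\<^esub> p z = p a \<otimes>\<^bsub>Q\<^esub> p z \<otimes>\<^bsub>Q\<^esub> inv\<^bsub>Q\<^esub> (p a) \<otimes>\<^bsub>Q\<^esub> p a"
      using ca cz by (simp add: Q.m_assoc)
    also have "\<dots> = p z \<otimes>\<^bsub>Q\<^esub> p a" by (simp only: e1)
    finally show ?thesis .
  qed
  have cms0: "Q.cm (p a) (p b) \<in> p ` zset K" if a: "a \<in> gset K" and b: "b \<in> gset K" for a b
  proof -
    obtain x g where ax: "a = gn x g" "x \<in> N" "g \<in> carrier G" "x \<in> K \<or> g \<in> K"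
      by (rule gset_cases[OF a KN])
    obtain y h where by': "b = gn y h" "y \<in> N" "h \<in> carrier G" "y \<in> K \<or> h \<in> K"
      by (rule gset_cases[OF b KN])
    have ca: "a \<in> carrier T" and cb: "b \<in> carrier T" using ax by' by simp_all
    have "Q.cm (p a) (p b) = p (a \<otimes>\<^bsub>T\<^esub> b \<otimes>\<^bsub>T\<^esub> inv\<^bsub>T\<^esub> a \<otimes>\<^bsub>T\<^esub> inv\<^bsub>T\<^esub> b)"
      using ca cb by (simp add: Q.cm_def)
    also have "\<dots> = p (gn (comm G x g) (comm G y h))" using CM[OF ax(2,3) by'(2,3)] ax by' by simp
    finally have e: "Q.cm (p a) (p b) = p (gn (comm G x g) (comm G y h))" .
    have "gn (comm G x g) (comm G y h) \<in> zset K"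
      unfolding zset_def using commgK[OF ax(2-4)] commgK[OF by'(2-4)] by auto
    then show ?thesis using e by simp
  qed
  have zexp0: "p z [^]\<^bsub>Q\<^esub> e = \<one>\<^bsub>Q\<^esub>" if z: "z \<in> zset K" for z
  proof -
    obtain k c where zk: "z = gn k c" "k \<in> K" "c \<in> K" using zset_cases[OF z] by auto
    have kN: "k \<in> N" and cG: "c \<in> carrier G" using zk KN Kc by auto
    have "p z [^]\<^bsub>Q\<^esub> e = p (gn (k [^] e) c)" using lin[OF zk(2,3), of e] zk by simp
    also have "\<dots> = \<one>\<^bsub>Q\<^esub>" using ex[OF kN] cG by simp
    finally show ?thesis .
  qed
  have sm0: "p a [^]\<^bsub>Q\<^esub> m = \<one>\<^bsub>Q\<^esub>" if a: "a \<in> gset K" for a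
  proof -
    obtain x g where ax: "a = gn x g" "x \<in> N" "g \<in> carrier G" "x \<in> K \<or> g \<in> K"
      by (rule gset_cases[OF a KN])
    define c where "c = comm G x g"
    have cK: "c \<in> K" unfolding c_def by (rule commgK[OF ax(2-4)])
    have xc: "x \<in> carrier G" using ax by simp
    have cG: "c \<in> carrier G" using cK Kc by auto
    show ?thesis
    proof (cases "x \<in> K")
      case True
      define Z where "Z = p (gn x c)"
      define A where "A = (\<lambda>n::nat. p (gn (x [^] n) g))"
      have zK: "gn x c \<in> zset K" unfolding zset_def using True cK by auto
      have Zc: "Z \<in> carrier Q" unfolding Z_def using ax cG by simp
      have Sc: "p a \<in> carrier Q" using ax by simp
      have zs: "Z \<otimes>\<^bsub>Q\<^esub> p a = p a \<otimes>\<^bsub>Q\<^esub> Z" unfolding Z_def using cent0[OF a zK] by simp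
      have A0: "A 0 = \<one>\<^bsub>Q\<^esub>" unfolding A_def using ax by simp
      have AS: "A (Suc n) = Z [^]\<^bsub>Q\<^esub> n \<otimes>\<^bsub>Q\<^esub> p a \<otimes>\<^bsub>Q\<^esub> A n" for n
      proof -
        have r: "gn (x [^] n \<otimes> x) g = gn (conjg G (x [^] n) x) (conjg G (x [^] n) g) \<otimes>\<^bsub>T\<^esub> gn (x [^] n) g"
          by (rule R1) (use ax in simp_all)
        have d: "gn (conjg G (x [^] n) x) (conjg G (x [^] n) g) = gn (x [^] n) c \<otimes>\<^bsub>T\<^esub> gn x g"
          unfolding c_def by (rule D) (use ax in simp_all)
        have "A (Suc n) = p (gn (x [^] n) c \<otimes>\<^bsub>T\<^esub> gn x g \<otimes>\<^bsub>T\<^esub> gn (x [^] n) g)"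
          unfolding A_def using r d by simp
        also have "\<dots> = p (gn (x [^] n) c) \<otimes>\<^bsub>Q\<^esub> p (gn x g) \<otimes>\<^bsub>Q\<^esub> p (gn (x [^] n) g)"
          using ax cG by simp
        also have "\<dots> = Z [^]\<^bsub>Q\<^esub> n \<otimes>\<^bsub>Q\<^esub> p a \<otimes>\<^bsub>Q\<^esub> A n"
          unfolding A_def Z_def using lin[OF True cK, of n] ax by simp
        finally show ?thesis .
      qed
      have Ae: "A e = p a [^]\<^bsub>Q\<^esub> e \<otimes>\<^bsub>Q\<^esub> Z [^]\<^bsub>Q\<^esub> (e * (e - 1) div 2)"
        by (rule Q.seqA[OF Sc Zc zs A0 AS])
      have "A e = \<one>\<^bsub>Q\<^esub>" unfolding A_def using ex[OF ax(2)] ax by simp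
      then have se: "p a [^]\<^bsub>Q\<^esub> e \<otimes>\<^bsub>Q\<^esub> Z [^]\<^bsub>Q\<^esub> (e * (e - 1) div 2) = \<one>\<^bsub>Q\<^esub>" using Ae by simp
      have ze: "Z [^]\<^bsub>Q\<^esub> e = \<one>\<^bsub>Q\<^esub>" unfolding Z_def by (rule zexp0[OF zK])
      show ?thesis by (rule Q.gen_order[OF Sc Zc ze se m])
    next
      case False
      then have gK': "g \<in> K" using ax by simp
      have gN: "g \<in> N" using gK' KN by auto
      define Z where "Z = p (gn g c)"
      define A where "A = (\<lambda>n::nat. p (gn x (g [^] n)))"
      have zK: "gn g c \<in> zset K" unfolding zset_def using gK' cK by auto
      have Zc: "Z \<in> carrier Q" unfolding Z_def using gN cG by simp
      have Sc: "p a \<in> carrier Q" using ax by simp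
      have zs: "Z \<otimes>\<^bsub>Q\<^esub> p a = p a \<otimes>\<^bsub>Q\<^esub> Z" unfolding Z_def using cent0[OF a zK] by simp
      have A0: "A 0 = \<one>\<^bsub>Q\<^esub>" unfolding A_def using ax by simp
      have AS: "A (Suc n) = A n \<otimes>\<^bsub>Q\<^esub> Z [^]\<^bsub>Q\<^esub> n \<otimes>\<^bsub>Q\<^esub> p a" for n
      proof -
        have r: "gn x (g [^] n \<otimes> g) = gn x (g [^] n) \<otimes>\<^bsub>T\<^esub> gn (conjg G (g [^] n) x) (conjg G (g [^] n) g)"
          by (rule R2) (use ax in simp_all)
        have d: "gn (conjg G (g [^] n) x) (conjg G (g [^] n) g) = gn (g [^] n) c \<otimes>\<^bsub>T\<^esub> gn x g"
          unfolding c_def by (rule D) (use ax gN in simp_all)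
        have "A (Suc n) = p (gn x (g [^] n) \<otimes>\<^bsub>T\<^esub> (gn (g [^] n) c \<otimes>\<^bsub>T\<^esub> gn x g))"
          unfolding A_def using r d by simp
        also have "\<dots> = p (gn x (g [^] n)) \<otimes>\<^bsub>Q\<^esub> (p (gn (g [^] n) c) \<otimes>\<^bsub>Q\<^esub> p (gn x g))"
          using ax cG gN by simp
        also have "\<dots> = A n \<otimes>\<^bsub>Q\<^esub> Z [^]\<^bsub>Q\<^esub> n \<otimes>\<^bsub>Q\<^esub> p a"
          unfolding A_def Z_def using lin[OF gK' cK, of n] ax gN cG by (simp add: Q.m_assoc)
        finally show ?thesis .
      qed
      have Ae: "A e = p a [^]\<^bsub>Q\<^esub> e \<otimes>\<^bsub>Q\<^esub> Z [^]\<^bsub>Q\<^esub> (e * (e - 1) div 2)"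
        by (rule Q.seqB[OF Sc Zc zs A0 AS])
      have "A e = \<one>\<^bsub>Q\<^esub>" unfolding A_def using ex[OF gN] ax by simp
      then have se: "p a [^]\<^bsub>Q\<^esub> e \<otimes>\<^bsub>Q\<^esub> Z [^]\<^bsub>Q\<^esub> (e * (e - 1) div 2) = \<one>\<^bsub>Q\<^esub>" using Ae by simp
      have ze: "Z [^]\<^bsub>Q\<^esub> e = \<one>\<^bsub>Q\<^esub>" unfolding Z_def by (rule zexp0[OF zK])
      show ?thesis by (rule Q.gen_order[OF Sc Zc ze se m])
    qed
  qed
  have pu: "p u \<in> generate Q (p ` gset K)"
    using P.generate_img[OF gK] u by simp
  have "p u [^]\<^bsub>Q\<^esub> m = \<one>\<^bsub>Q\<^esub>"
  proof (rule Q.class2[where S = "p ` gset K" and Zs = "p ` zset K" and e = e])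
    show "p ` gset K \<subseteq> carrier Q" using gK by auto
    show "p ` zset K \<subseteq> p ` gset K" using zset_sub[OF KN] by auto
    show "Q.cm s s' \<in> p ` zset K" if "s \<in> p ` gset K" "s' \<in> p ` gset K" for s s'
      using that cms0 by auto
    show "z \<otimes>\<^bsub>Q\<^esub> s = s \<otimes>\<^bsub>Q\<^esub> z" if "z \<in> p ` zset K" "s \<in> p ` gset K" for z s
      using that cent0 by auto
    show "z [^]\<^bsub>Q\<^esub> e = \<one>\<^bsub>Q\<^esub>" if "z \<in> p ` zset K" for z using that zexp0 by auto
    show "s [^]\<^bsub>Q\<^esub> m = \<one>\<^bsub>Q\<^esub>" if "s \<in> p ` gset K" for s using that sm0 by auto
    show "e dvd m * (m - 1) div 2" by (rule Q.dvd_m[OF m])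
    show "p u \<in> generate Q (p ` gset K)" by (rule pu)
  qed
  moreover have uc: "u \<in> carrier T" using u T.generate_incl[OF gK] by auto
  ultimately have "p (u [^]\<^bsub>T\<^esub> m) = \<one>\<^bsub>Q\<^esub>" using P.hom_nat_pow[OF uc, of m] by simp
  then show ?thesis using p1[of "u [^]\<^bsub>T\<^esub> m"] uc unfolding H_def by simp
qed

end

context tens begin

lemma gset_one: "generate T (gset {\<one>}) = {\<one>\<^bsub>T\<^esub>}"
proof -
  have "gset {\<one>} \<subseteq> {\<one>\<^bsub>T\<^esub>}" unfolding gset_def by auto
  then have "generate T (gset {\<one>}) \<subseteq> generate T {\<one>\<^bsub>T\<^esub>}" by (rule T.mono_generate)
  also have "\<dots> = {\<one>\<^bsub>T\<^esub>}" by (rule T.generate_one)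
  finally show ?thesis using generate.one[of T "gset {\<one>}"] by auto
qed

lemma all_pow:
  fixes e m d :: nat
  assumes hd: "(derived G ^^ d) N = {\<one>}"
    and ex: "\<And>x. x \<in> N \<Longrightarrow> x [^] e = \<one>"
    and m: "m = (if odd e then e else 2 * e)"
    and u: "u \<in> carrier T"
  shows "u [^]\<^bsub>T\<^esub> (m ^ d) = \<one>\<^bsub>T\<^esub>"
proof -
  define Ni where "Ni = (\<lambda>i. (derived G ^^ i) N)"
  have NiS: "Ni (Suc i) = derived G (Ni i)" for i unfolding Ni_def by simp
  have Nnorm: "Ni i \<lhd> G \<and> Ni i \<subseteq> N" for i
  proof (induction i)
    case 0 then show ?case unfolding Ni_def using nN by simp
  next
    case (Suc i)
    have sg: "subgroup (Ni i) G" using Suc normal_imp_subgroup by auto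
    have "derived G (Ni i) \<subseteq> Ni i" by (rule derived_incl[OF order_refl sg])
    then show ?case using Suc derived_is_normal[of "Ni i"] NiS[of i] by auto
  qed
  have commK: "comm G k c \<in> Ni (Suc i)" if "k \<in> Ni i" "c \<in> Ni i" for k c i
  proof -
    have "comm G k c \<in> derived_set G (Ni i)" unfolding comm_def using that by blast
    then show ?thesis unfolding NiS derived_def by (rule generate.incl)
  qed
  have claim: "u [^]\<^bsub>T\<^esub> (m ^ i) \<in> generate T (gset (Ni i))" for i
  proof (induction i)
    case 0 then show ?case using u carrier_T_gen unfolding Ni_def by auto
  next
    case (Suc i)
    have "(u [^]\<^bsub>T\<^esub> (m ^ i)) [^]\<^bsub>T\<^esub> m \<in> generate T (gset (Ni (Suc i)))"
      by (rule step[OF conjunct1[OF Nnorm] conjunct2[OF Nnorm] conjunct1[OF Nnorm] conjunct2[OF Nnorm] commK ex m Suc])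
    moreover have "(u [^]\<^bsub>T\<^esub> (m ^ i)) [^]\<^bsub>T\<^esub> m = u [^]\<^bsub>T\<^esub> (m ^ Suc i)"
      using u by (simp add: T.nat_pow_pow mult.commute)
    ultimately show ?case by simp
  qed
  have "Ni d = {\<one>}" unfolding Ni_def using hd .
  then show ?thesis using claim[of d] gset_one by simp
qed

end

lemma wpow_add: "wpow w (a + b) = wpow w a @ wpow w b"
  by (simp add: wpow_def replicate_add)

lemma exp_dvd_gen:
  fixes R :: "'a tword \<Rightarrow> 'a tword \<Rightarrow> bool"
  assumes Rrefl: "\<And>u. R u u" and Rsym: "\<And>u v. R u v \<Longrightarrow> R v u"
    and Rtrans: "\<And>u v w. R u v \<Longrightarrow> R v w \<Longrightarrow> R u w"
    and Rcong: "\<And>u v a b. R u v \<Longrightarrow> R (a @ u @ b) (a @ v @ b)"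
    and M: "M > 0" and PM: "\<forall>w\<in>W. R (wpow w M) []"
  shows "(if \<exists>n>0. \<forall>w\<in>W. R (wpow w n) [] then (LEAST n. n > 0 \<and> (\<forall>w\<in>W. R (wpow w n) [])) else 0) dvd M"
proof -
  let ?P = "\<lambda>n. n > 0 \<and> (\<forall>w\<in>W. R (wpow w n) [])"
  have ex: "\<exists>n>0. \<forall>w\<in>W. R (wpow w n) []" using M PM by auto
  define E where "E = (LEAST n. ?P n)"
  have PE: "?P E" unfolding E_def by (rule LeastI[of ?P M]) (use M PM in auto)
  have app: "R (u @ v) (u' @ v')" if "R u u'" "R v v'" for u v u' v'
  proof -
    have "R (u @ v) (u' @ v)" using Rcong[OF that(1), of "[]" v] by simp
    moreover have "R (u' @ v) (u' @ v')" using Rcong[OF that(2), of u' "[]"] by simp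
    ultimately show ?thesis by (rule Rtrans)
  qed
  have mulE: "R (wpow w (E * q)) []" if w: "w \<in> W" for w q
  proof (induction q)
    case 0 then show ?case by (simp add: wpow_def Rrefl)
  next
    case (Suc q)
    have "wpow w (E * Suc q) = wpow w E @ wpow w (E * q)" by (simp add: wpow_add[symmetric])
    moreover have "R (wpow w E @ wpow w (E * q)) ([] @ [])" by (rule app) (use PE w Suc in auto)
    ultimately show ?case by simp
  qed
  define r where "r = M mod E"
  have Mdec: "M = E * (M div E) + r" unfolding r_def by simp
  have Pr: "R (wpow w r) []" if w: "w \<in> W" for w
  proof -
    have "R (wpow w M) ([] @ wpow w r)"
    proof -
      have "wpow w M = wpow w (E * (M div E)) @ wpow w r" using Mdec wpow_add by metis
      moreover have "R (wpow w (E * (M div E)) @ wpow w r) ([] @ wpow w r)" using app mulE[OF w] Rrefl by blast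
      ultimately show ?thesis by simp
    qed
    then have "R (wpow w r) (wpow w M)" using Rsym by simp
    then show ?thesis using PM w Rtrans by blast
  qed
  have "r = 0"
  proof (rule ccontr)
    assume "r \<noteq> 0"
    then have "?P r" using Pr by auto
    moreover have "r < E" unfolding r_def using PE by simp
    ultimately show False using not_less_Least[of r ?P] unfolding E_def by blast
  qed
  then have "E dvd M" unfolding r_def by auto
  then show ?thesis using ex E_def by simp
qed

lemma tensor_imp_wedge: "tensor_eq G N u v \<Longrightarrow> wedge_eq G N u v"
  by (induction rule: tensor_eq.induct) (auto intro: wedge_eq.intros)

theorem lemma6p4:
  fixes G :: "('a, 'b) monoid_scheme" and N :: "'a set" and d :: nat
  assumes "group G"
    and "N \<lhd> G"
    and "((derived G) ^^ d) N = {\<one>\<^bsub>G\<^esub>}"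
    and "\<forall>k<d. ((derived G) ^^ k) N \<noteq> {\<one>\<^bsub>G\<^esub>}"
    and "subgroup_exponent G N > 0"
  shows "(odd (subgroup_exponent G N) \<longrightarrow>
            tensor_exponent G N dvd (subgroup_exponent G N) ^ d \<and>
            rel_multiplier_exponent G N dvd (subgroup_exponent G N) ^ d)
       \<and> (even (subgroup_exponent G N) \<longrightarrow>
            tensor_exponent G N dvd 2 ^ d * (subgroup_exponent G N) ^ d \<and>
            rel_multiplier_exponent G N dvd 2 ^ d * (subgroup_exponent G N) ^ d)"
proof -
  interpret tens G N by (intro tens.intro tens_axioms.intro assms(1,2))
  define e where "e = subgroup_exponent G N"
  have e0: "e > 0" using assms(5) by (simp add: e_def)
  have exP: "\<exists>n::nat>0. \<forall>x\<in>N. x [^]\<^bsub>G\<^esub> n = \<one>\<^bsub>G\<^esub>"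
  proof (rule ccontr)
    assume na: "\<not> ?thesis"
    have "e = 0" unfolding e_def subgroup_exponent_def by (rule if_not_P[OF na])
    then show False using e0 by simp
  qed
  have eL: "e = (LEAST n::nat. n > 0 \<and> (\<forall>x\<in>N. x [^]\<^bsub>G\<^esub> n = \<one>\<^bsub>G\<^esub>))"
    unfolding e_def subgroup_exponent_def using exP by simp
  have ex: "x [^]\<^bsub>G\<^esub> e = \<one>\<^bsub>G\<^esub>" if "x \<in> N" for x
  proof -
    obtain n0 :: nat where "n0 > 0 \<and> (\<forall>x\<in>N. x [^]\<^bsub>G\<^esub> n0 = \<one>\<^bsub>G\<^esub>)" using exP by auto
    then have "e > 0 \<and> (\<forall>x\<in>N. x [^]\<^bsub>G\<^esub> e = \<one>\<^bsub>G\<^esub>)" unfolding eL by (rule LeastI)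
    then show ?thesis using that by simp
  qed
  define m where "m = (if odd e then e else 2 * e)"
  define M where "M = m ^ d"
  have M0: "M > 0" unfolding M_def m_def using e0 by simp
  have PT: "\<forall>w\<in>twords G N. tensor_eq G N (wpow w M) []"
  proof
    fix w assume w: "w \<in> twords G N"
    have wc: "tcls G N w \<in> carrier T" using w by (simp add: TT_carrier)
    have "tcls G N w [^]\<^bsub>T\<^esub> M = \<one>\<^bsub>T\<^esub>"
      unfolding M_def by (rule all_pow[OF assms(3) ex m_def wc])
    then have "tcls G N (wpow w M) = tcls G N []" by (simp add: TT_pow TT_one)
    then show "tensor_eq G N (wpow w M) []" by (simp add: tcls_eq_iff)
  qed
  have PW: "\<forall>w\<in>mwords G N. wedge_eq G N (wpow w M) []"
  proof
    fix w assume "w \<in> mwords G N"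
    then have "w \<in> twords G N" unfolding mwords_def by simp
    then have "tensor_eq G N (wpow w M) []" using PT by simp
    then show "wedge_eq G N (wpow w M) []" by (rule tensor_imp_wedge)
  qed
  have dT: "tensor_exponent G N dvd M"
    unfolding tensor_exponent_def
    by (rule exp_dvd_gen[OF tensor_eq.refl tensor_eq.sym tensor_eq.trans tensor_eq.cong M0 PT])
  have dW: "rel_multiplier_exponent G N dvd M"
    unfolding rel_multiplier_exponent_def
    by (rule exp_dvd_gen[OF wedge_eq.refl wedge_eq.sym wedge_eq.trans wedge_eq.cong M0 PW])
  show ?thesis
  proof (intro conjI impI)
    assume "odd (subgroup_exponent G N)"
    then have "M = (subgroup_exponent G N) ^ d" unfolding M_def m_def e_def by simp
    then show "tensor_exponent G N dvd (subgroup_exponent G N) ^ d"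
      and "rel_multiplier_exponent G N dvd (subgroup_exponent G N) ^ d" using dT dW by simp_all
  next
    assume "even (subgroup_exponent G N)"
    then have "M = 2 ^ d * (subgroup_exponent G N) ^ d" unfolding M_def m_def e_def by (simp add: power_mult_distrib)
    then show "tensor_exponent G N dvd 2 ^ d * (subgroup_exponent G N) ^ d"
      and "rel_multiplier_exponent G N dvd 2 ^ d * (subgroup_exponent G N) ^ d" using dT dW by simp_all
  qed
qed

end
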